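(* Let $\epsilon\in(0,1/e]$, $p_v,p_e\in(0,1]$, let $G=(V,E)$ be a graph with nonnegative edge weights $w_e$, and let $x$ be the fractional matching produced by the non-crucial edge procedure (context). Then $$\mathbb{E}\Big[\sum_{e\in N}w_e\,x_e\Big]\ \ge\ (1-10\epsilon)\,\varphi(N).$$
   Context: Realization model: given $p_v,p_e\in(0,1]$ and $G=(V,E)$ with weights $w_e\ge0$, a realization $\mathcal{G}=(\mathcal{V},\mathcal{E})$ keeps each vertex independently with probability $p_v$ and each edge $(u,v)$ independently with probability $p_e$ provided both $u,v$ are kept. Fix a deterministic algorithm computing a maximum-weight matching $M(H)$. $q_e:=\Pr[e\in M(\mathcal{G})]$. For $X\subseteq E$, $\varphi(X):=\sum_{e\in X}w_eq_e$. $\tau=\frac{\epsilon^3p_v^2p_e}{20\log(1/\epsilon)}$, $R=\frac{2000\log(1/\epsilon)\log(1/(\epsilon p_v^2p_e))}{\epsilon^4p_v^2p_e}$. $N=\{e\in E:q_e<\tau\}$; $q_v^N:=\sum_{e\in N,\,e\ni v}q_e$. Algorithm 1: for $r=1,\dots,R$ draw an independent realization $\mathcal{G}_r$ and put the edges of $M(\mathcal{G}_r)$ into $Q=(V,E_Q)$; $f_e:=$ (number of $r$ with $e\in M(\mathcal{G}_r)$)$/R$. The realization $\mathcal{G}$ is independent of the algorithm's samples; $\mathcal{E}_Q=E_Q\cap\mathcal{E}$. Non-crucial edge procedure: (1) for $e\in\mathcal{E}_Q\cap N$ set $\tilde x_e=\min\{f_e/(p_v^2p_e),\,2\tau/(p_v^2p_e)\}$,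 and $\tilde x_e=0$ otherwise; let $\tilde x_v=\sum_{e\ni v}\tilde x_e$. (2) For each edge $e$ set $s_e=\min\big(\{1\}\cup\{\max\{q_v^N,\epsilon\}/(p_v\tilde x_v): v\in e\}\big)$. (3) Set $x_e=s_e\tilde x_e$. *)

theory Defs
  imports "HOL-Probability.Probability"
begin

text \<open>Graphs: vertex set V :: 'a set, edge set E :: 'a set set, each edge a 2-element set.
A realization is a pair (kept vertices, kept edges).\<close>

type_synonym 'a realz = "'a set \<times> 'a set set"

definition simple_graph :: "'a set \<Rightarrow> 'a set set \<Rightarrow> bool" where
  "simple_graph V E \<longleftrightarrow> finite V \<and> (\<forall>e\<in>E. \<exists>u v. u \<in> V \<and> v \<in> V \<and> u \<noteq> v \<and> e = {u, v})"

definition realization :: "real \<Rightarrow> real \<Rightarrow> 'a set \<Rightarrow> 'a set set \<Rightarrow> 'a realz pmf" where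
  "realization pv pe V E =
     map_pmf (\<lambda>(cv, ce). ({v \<in> V. cv v}, {e \<in> E. (\<forall>v\<in>e. cv v) \<and> ce e}))
       (pair_pmf (Pi_pmf V False (\<lambda>_. bernoulli_pmf pv)) (Pi_pmf E False (\<lambda>_. bernoulli_pmf pe)))"

definition is_matching :: "'a set set \<Rightarrow> bool" where
  "is_matching M \<longleftrightarrow> (\<forall>e\<in>M. \<forall>f\<in>M. e \<noteq> f \<longrightarrow> e \<inter> f = {})"

definition is_max_weight_matching :: "('a set \<Rightarrow> real) \<Rightarrow> 'a realz \<Rightarrow> 'a set set \<Rightarrow> bool" where
  "is_max_weight_matching w H M \<longleftrightarrow>
     M \<subseteq> snd H \<and> is_matching M \<and>
     (\<forall>M'. M' \<subseteq> snd H \<and> is_matching M' \<longrightarrow> sum w M' \<le> sum w M)"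

definition qprob :: "('a realz \<Rightarrow> 'a set set) \<Rightarrow> real \<Rightarrow> real \<Rightarrow> 'a set \<Rightarrow> 'a set set \<Rightarrow> 'a set \<Rightarrow> real" where
  "qprob Alg pv pe V E e = measure_pmf.prob (realization pv pe V E) {H. e \<in> Alg H}"

definition phi :: "('a set \<Rightarrow> real) \<Rightarrow> ('a realz \<Rightarrow> 'a set set) \<Rightarrow> real \<Rightarrow> real \<Rightarrow> 'a set \<Rightarrow> 'a set set \<Rightarrow> 'a set set \<Rightarrow> real" where
  "phi w Alg pv pe V E X = (\<Sum>e\<in>X. w e * qprob Alg pv pe V E e)"

definition tau :: "real \<Rightarrow> real \<Rightarrow> real \<Rightarrow> real" where
  "tau eps pv pe = eps ^ 3 * pv\<^sup>2 * pe / (20 * ln (1 / eps))"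

definition Rrounds :: "real \<Rightarrow> real \<Rightarrow> real \<Rightarrow> nat" where
  "Rrounds eps pv pe =
     nat \<lceil>2000 * ln (1 / eps) * ln (1 / (eps * pv\<^sup>2 * pe)) / (eps ^ 4 * pv\<^sup>2 * pe)\<rceil>"

definition Nset :: "('a realz \<Rightarrow> 'a set set) \<Rightarrow> real \<Rightarrow> real \<Rightarrow> real \<Rightarrow> 'a set \<Rightarrow> 'a set set \<Rightarrow> 'a set set" where
  "Nset Alg eps pv pe V E = {e \<in> E. qprob Alg pv pe V E e < tau eps pv pe}"

definition qN :: "('a realz \<Rightarrow> 'a set set) \<Rightarrow> real \<Rightarrow> real \<Rightarrow> real \<Rightarrow> 'a set \<Rightarrow> 'a set set \<Rightarrow> 'a \<Rightarrow> real" where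
  "qN Alg eps pv pe V E v = (\<Sum>e\<in>{e \<in> Nset Alg eps pv pe V E. v \<in> e}. qprob Alg pv pe V E e)"

definition samples :: "real \<Rightarrow> real \<Rightarrow> real \<Rightarrow> 'a set \<Rightarrow> 'a set set \<Rightarrow> (nat \<Rightarrow> 'a realz) pmf" where
  "samples eps pv pe V E = Pi_pmf {..<Rrounds eps pv pe} ({}, {}) (\<lambda>_. realization pv pe V E)"

definition EQ :: "('a realz \<Rightarrow> 'a set set) \<Rightarrow> real \<Rightarrow> real \<Rightarrow> real \<Rightarrow> (nat \<Rightarrow> 'a realz) \<Rightarrow> 'a set set" where
  "EQ Alg eps pv pe \<sigma> = (\<Union>r<Rrounds eps pv pe. Alg (\<sigma> r))"

definition freq :: "('a realz \<Rightarrow> 'a set set) \<Rightarrow> real \<Rightarrow> real \<Rightarrow> real \<Rightarrow> (nat \<Rightarrow> 'a realz) \<Rightarrow> 'a set \<Rightarrow> real" where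
  "freq Alg eps pv pe \<sigma> e =
     real (card {r \<in> {..<Rrounds eps pv pe}. e \<in> Alg (\<sigma> r)}) / real (Rrounds eps pv pe)"

definition xtilde :: "('a realz \<Rightarrow> 'a set set) \<Rightarrow> real \<Rightarrow> real \<Rightarrow> real \<Rightarrow> 'a set \<Rightarrow> 'a set set
    \<Rightarrow> (nat \<Rightarrow> 'a realz) \<Rightarrow> 'a realz \<Rightarrow> 'a set \<Rightarrow> real" where
  "xtilde Alg eps pv pe V E \<sigma> H e =
     (if e \<in> EQ Alg eps pv pe \<sigma> \<inter> snd H \<inter> Nset Alg eps pv pe V E
      then min (freq Alg eps pv pe \<sigma> e / (pv\<^sup>2 * pe)) (2 * tau eps pv pe / (pv\<^sup>2 * pe))
      else 0)"

definition xtilde_v :: "('a realz \<Rightarrow> 'a set set) \<Rightarrow> real \<Rightarrow> real \<Rightarrow> real \<Rightarrow> 'a set \<Rightarrow> 'a set set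
    \<Rightarrow> (nat \<Rightarrow> 'a realz) \<Rightarrow> 'a realz \<Rightarrow> 'a \<Rightarrow> real" where
  "xtilde_v Alg eps pv pe V E \<sigma> H v = (\<Sum>e\<in>{e \<in> E. v \<in> e}. xtilde Alg eps pv pe V E \<sigma> H e)"

text \<open>Step (2). A vertex with xtilde_v = 0 gives the ratio +infinity, i.e. no constraint.\<close>
definition scale :: "('a realz \<Rightarrow> 'a set set) \<Rightarrow> real \<Rightarrow> real \<Rightarrow> real \<Rightarrow> 'a set \<Rightarrow> 'a set set
    \<Rightarrow> (nat \<Rightarrow> 'a realz) \<Rightarrow> 'a realz \<Rightarrow> 'a set \<Rightarrow> real" where
  "scale Alg eps pv pe V E \<sigma> H e =
     Min ({1} \<union> {max (qN Alg eps pv pe V E v) eps / (pv * xtilde_v Alg eps pv pe V E \<sigma> H v) | v.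
                   v \<in> e \<and> xtilde_v Alg eps pv pe V E \<sigma> H v > 0})"

definition xfrac :: "('a realz \<Rightarrow> 'a set set) \<Rightarrow> real \<Rightarrow> real \<Rightarrow> real \<Rightarrow> 'a set \<Rightarrow> 'a set set
    \<Rightarrow> (nat \<Rightarrow> 'a realz) \<Rightarrow> 'a realz \<Rightarrow> 'a set \<Rightarrow> real" where
  "xfrac Alg eps pv pe V E \<sigma> H e =
     scale Alg eps pv pe V E \<sigma> H e * xtilde Alg eps pv pe V E \<sigma> H e"

end

theory Submission
  imports Defs
begin


lemma pmf_integrable_AE_bdd:
  fixes f :: "'a \<Rightarrow> real"
  assumes "\<And>x. x \<in> set_pmf p \<Longrightarrow> \<bar>f x\<bar> \<le> B"
  shows "integrable (measure_pmf p) f"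
  by (rule measure_pmf.integrable_const_bound[where B=B]) (auto intro!: AE_pmfI assms)

lemma pmf_integrable_bdd:
  fixes f :: "'a \<Rightarrow> real"
  assumes "\<And>x. \<bar>f x\<bar> \<le> B"
  shows "integrable (measure_pmf p) f"
  using assms by (intro pmf_integrable_AE_bdd) auto

lemma pmf_exp_mono:
  fixes f g :: "'a \<Rightarrow> real"
  assumes "\<And>x. x \<in> set_pmf p \<Longrightarrow> f x \<le> g x"
    and "\<And>x. x \<in> set_pmf p \<Longrightarrow> \<bar>f x\<bar> \<le> B" "\<And>x. x \<in> set_pmf p \<Longrightarrow> \<bar>g x\<bar> \<le> B'"
  shows "measure_pmf.expectation p f \<le> measure_pmf.expectation p g"
  by (rule integral_mono_AE) (auto intro!: AE_pmfI assms pmf_integrable_AE_bdd)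

lemma exp_pair_iter:
  fixes f :: "'a \<times> 'b \<Rightarrow> real"
  assumes nn: "\<And>x. 0 \<le> f x" and bd: "\<And>x. f x \<le> B"
  shows "measure_pmf.expectation (pair_pmf p q) f =
         measure_pmf.expectation p (\<lambda>a. measure_pmf.expectation q (\<lambda>b. f (a, b)))"
proof -
  have B0: "0 \<le> B" using nn bd order_trans by blast
  have i1: "integrable (measure_pmf (pair_pmf p q)) f"
    by (rule pmf_integrable_bdd[of _ B]) (use nn bd in auto)
  have i2: "integrable (measure_pmf q) (\<lambda>b. f (a, b))" for a
    by (rule pmf_integrable_bdd[of _ B]) (use nn bd in auto)
  have ge: "0 \<le> measure_pmf.expectation q (\<lambda>b. f (a, b))" for a
    by (intro Bochner_Integration.integral_nonneg nn)
  have le: "measure_pmf.expectation q (\<lambda>b. f (a, b)) \<le> B" for a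
  proof -
    have "measure_pmf.expectation q (\<lambda>b. f (a, b)) \<le> measure_pmf.expectation q (\<lambda>b. B)"
      by (intro integral_mono i2) (auto intro: bd)
    thus ?thesis by simp
  qed
  have i3: "integrable (measure_pmf p) (\<lambda>a. measure_pmf.expectation q (\<lambda>b. f (a, b)))"
    by (rule pmf_integrable_bdd[of _ B]) (use ge le in auto)
  have "ennreal (measure_pmf.expectation (pair_pmf p q) f) = (\<integral>\<^sup>+x. ennreal (f x) \<partial>pair_pmf p q)"
    by (rule nn_integral_eq_integral[symmetric]) (use i1 nn in auto)
  also have "\<dots> = (\<integral>\<^sup>+a. \<integral>\<^sup>+b. ennreal (f (a, b)) \<partial>q \<partial>p)"
    by (rule nn_integral_pair_pmf')
  also have "\<dots> = (\<integral>\<^sup>+a. ennreal (measure_pmf.expectation q (\<lambda>b. f (a, b))) \<partial>p)"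
    by (intro nn_integral_cong nn_integral_eq_integral) (use i2 nn in auto)
  also have "\<dots> = ennreal (measure_pmf.expectation p (\<lambda>a. measure_pmf.expectation q (\<lambda>b. f (a, b))))"
    by (rule nn_integral_eq_integral) (use i3 ge in auto)
  finally show ?thesis
    by (subst (asm) ennreal_inj) (auto intro!: Bochner_Integration.integral_nonneg nn ge)
qed

lemma exp_pair_prod:
  fixes g :: "'a \<Rightarrow> real" and h :: "'b \<Rightarrow> real"
  assumes "\<And>x. 0 \<le> g x" "\<And>x. g x \<le> B" "\<And>x. 0 \<le> h x" "\<And>x. h x \<le> B'"
  shows "measure_pmf.expectation (pair_pmf p q) (\<lambda>x. g (fst x) * h (snd x)) =
         measure_pmf.expectation p g * measure_pmf.expectation q h"
proof -
  have "0 \<le> B" using assms(1)[of undefined] assms(2)[of undefined] by linarith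
  have "measure_pmf.expectation (pair_pmf p q) (\<lambda>x. g (fst x) * h (snd x)) =
        measure_pmf.expectation p (\<lambda>a. measure_pmf.expectation q (\<lambda>b. g (fst (a,b)) * h (snd (a,b))))"
    by (rule exp_pair_iter[where B="B*B'"])
       (use assms \<open>0 \<le> B\<close> in \<open>auto intro!: mult_mono mult_nonneg_nonneg\<close>)
  also have "\<dots> = measure_pmf.expectation p (\<lambda>a. g a * measure_pmf.expectation q h)"
    by simp
  also have "\<dots> = measure_pmf.expectation p g * measure_pmf.expectation q h"
    by simp
  finally show ?thesis .
qed

lemma exp_Pi_prod_reindex:
  fixes g :: "'z \<Rightarrow> 'b \<Rightarrow> real"
  assumes fin: "finite A" and finB: "finite B" and inj: "inj_on \<iota> B" and sub: "\<iota> ` B \<subseteq> A"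
    and nn: "\<And>z y. z \<in> B \<Longrightarrow> 0 \<le> g z y" and bd: "\<And>z y. z \<in> B \<Longrightarrow> g z y \<le> C"
  shows "measure_pmf.expectation (Pi_pmf A d p) (\<lambda>h. \<Prod>z\<in>B. g z (h (\<iota> z))) =
         (\<Prod>z\<in>B. measure_pmf.expectation (p (\<iota> z)) (g z))"
proof -
  define f where "f = (\<lambda>i. if i \<in> \<iota> ` B then g (inv_into B \<iota> i) else (\<lambda>_. 1))"
  have eq: "(\<Prod>z\<in>B. g z (h (\<iota> z))) = (\<Prod>i\<in>A. f i (h i))" for h
  proof -
    have "(\<Prod>i\<in>A. f i (h i)) = (\<Prod>i\<in>\<iota> ` B. f i (h i))"
      by (rule prod.mono_neutral_right) (use fin sub in \<open>auto simp: f_def\<close>)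
    also have "\<dots> = (\<Prod>z\<in>B. f (\<iota> z) (h (\<iota> z)))"
      by (rule prod.reindex[OF inj, unfolded comp_def])
    also have "\<dots> = (\<Prod>z\<in>B. g z (h (\<iota> z)))"
      by (intro prod.cong refl) (use inj in \<open>auto simp: f_def\<close>)
    finally show ?thesis by simp
  qed
  have "measure_pmf.expectation (Pi_pmf A d p) (\<lambda>h. \<Prod>i\<in>A. f i (h i)) =
        (\<Prod>i\<in>A. measure_pmf.expectation (p i) (f i))"
  proof (rule expectation_prod_Pi_pmf[OF fin])
    fix i assume "i \<in> A"
    show "integrable (measure_pmf (p i)) (f i)"
    proof (cases "i \<in> \<iota> ` B")
      case True
      then obtain z where "z \<in> B" "i = \<iota> z" by auto
      have "\<bar>g z y\<bar> \<le> \<bar>C\<bar> + 1" for y using nn[OF \<open>z \<in> B\<close>, of y] bd[OF \<open>z \<in> B\<close>, of y] by auto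
      thus ?thesis using inj \<open>z \<in> B\<close> \<open>i = \<iota> z\<close>
        by (intro pmf_integrable_bdd[of _ "\<bar>C\<bar> + 1"]) (auto simp: f_def)
    qed (simp add: f_def)
  next
    fix i y assume "i \<in> A" "y \<in> set_pmf (p i)"
    show "0 \<le> f i y" using nn inj by (auto simp: f_def)
  qed
  also have "\<dots> = (\<Prod>i\<in>\<iota> ` B. measure_pmf.expectation (p i) (f i))"
    by (rule prod.mono_neutral_right) (use fin sub in \<open>auto simp: f_def\<close>)
  also have "\<dots> = (\<Prod>z\<in>B. measure_pmf.expectation (p (\<iota> z)) (f (\<iota> z)))"
    by (rule prod.reindex[OF inj, unfolded comp_def])
  also have "\<dots> = (\<Prod>z\<in>B. measure_pmf.expectation (p (\<iota> z)) (g z))"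
    by (intro prod.cong refl) (use inj in \<open>auto simp: f_def\<close>)
  finally show ?thesis by (simp add: eq)
qed

lemma exp_lin_bound:
  fixes x l :: real
  assumes "0 \<le> x" "x \<le> 1"
  shows "exp (l * x) \<le> 1 + (exp l - 1) * x"
  using convex_onD[OF exp_convex, of x 0 l] assms by (simp add: algebra_simps)

lemma chernoff_Pi:
  fixes g :: "'b \<Rightarrow> real"
  assumes fin: "finite I"
    and g01: "\<And>i x. i \<in> I \<Longrightarrow> x \<in> set_pmf (p i) \<Longrightarrow> 0 \<le> g x \<and> g x \<le> 1"
    and lam: "0 \<le> l"
  shows "measure_pmf.prob (Pi_pmf I d p) {\<sigma>. t \<le> (\<Sum>i\<in>I. g (\<sigma> i))}
         \<le> exp (- l * t + (exp l - 1) * (\<Sum>i\<in>I. measure_pmf.expectation (p i) g))"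
proof -
  let ?P = "Pi_pmf I d p"
  let ?S = "\<lambda>\<sigma>. \<Sum>i\<in>I. g (\<sigma> i)"
  have supp: "\<sigma> i \<in> set_pmf (p i)" if "\<sigma> \<in> set_pmf ?P" "i \<in> I" for \<sigma> i
    using set_Pi_pmf_subset'[OF fin, of d p] that by (auto simp: PiE_dflt_def)
  have Sb: "0 \<le> ?S \<sigma> \<and> ?S \<sigma> \<le> real (card I)" if "\<sigma> \<in> set_pmf ?P" for \<sigma>
  proof
    show "0 \<le> ?S \<sigma>" using g01 supp[OF that] by (intro sum_nonneg) auto
    have "?S \<sigma> \<le> (\<Sum>i\<in>I. 1)" using g01 supp[OF that] by (intro sum_mono) auto
    thus "?S \<sigma> \<le> real (card I)" by simp
  qed
  have egb: "0 \<le> exp (l * g x) \<and> exp (l * g x) \<le> exp l" if "i \<in> I" "x \<in> set_pmf (p i)" for i x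
    using g01[OF that] lam by (auto simp: mult_left_le)
  have "measure_pmf.prob ?P {\<sigma>. t \<le> ?S \<sigma>} = measure_pmf.expectation ?P (indicator {\<sigma>. t \<le> ?S \<sigma>})"
    by simp
  also have "\<dots> \<le> measure_pmf.expectation ?P (\<lambda>\<sigma>. exp (l * (?S \<sigma> - t)))"
  proof (rule pmf_exp_mono[where B=1 and B'="exp (l * (real (card I) + \<bar>t\<bar>))"])
    fix \<sigma> assume "\<sigma> \<in> set_pmf ?P"
    show "indicator {\<sigma>. t \<le> ?S \<sigma>} \<sigma> \<le> exp (l * (?S \<sigma> - t))"
      using lam by (auto simp: indicator_def)
    show "\<bar>indicator {\<sigma>. t \<le> ?S \<sigma>} \<sigma>\<bar> \<le> (1::real)" by (auto simp: indicator_def)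
    show "\<bar>exp (l * (?S \<sigma> - t))\<bar> \<le> exp (l * (real (card I) + \<bar>t\<bar>))"
      using Sb[OF \<open>\<sigma> \<in> set_pmf ?P\<close>] lam by (auto intro!: mult_left_mono)
  qed
  also have "(\<lambda>\<sigma>. exp (l * (?S \<sigma> - t))) = (\<lambda>\<sigma>. exp (- l * t) * (\<Prod>i\<in>I. exp (l * g (\<sigma> i))))"
  proof (rule ext)
    fix \<sigma>
    have "exp (l * (?S \<sigma> - t)) = exp (- l * t) * exp (\<Sum>i\<in>I. l * g (\<sigma> i))"
      by (simp add: exp_add[symmetric] sum_distrib_left algebra_simps)
    thus "exp (l * (?S \<sigma> - t)) = exp (- l * t) * (\<Prod>i\<in>I. exp (l * g (\<sigma> i)))"
      by (simp add: exp_sum fin)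
  qed
  also have "measure_pmf.expectation ?P \<dots> = exp (- l * t) * measure_pmf.expectation ?P (\<lambda>\<sigma>. \<Prod>i\<in>I. exp (l * g (\<sigma> i)))"
    by simp
  also have "measure_pmf.expectation ?P (\<lambda>\<sigma>. \<Prod>i\<in>I. exp (l * g (\<sigma> i))) =
             (\<Prod>i\<in>I. measure_pmf.expectation (p i) (\<lambda>x. exp (l * g x)))"
    by (rule expectation_prod_Pi_pmf[OF fin])
       (auto intro!: pmf_integrable_AE_bdd[where B="exp l"] dest: egb)
  also have "\<dots> \<le> (\<Prod>i\<in>I. exp ((exp l - 1) * measure_pmf.expectation (p i) g))"
  proof (rule prod_mono, rule conjI)
    fix i assume i: "i \<in> I"
    show "0 \<le> measure_pmf.expectation (p i) (\<lambda>x. exp (l * g x))"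
      by (intro Bochner_Integration.integral_nonneg) auto
    have "measure_pmf.expectation (p i) (\<lambda>x. exp (l * g x)) \<le>
          measure_pmf.expectation (p i) (\<lambda>x. 1 + (exp l - 1) * g x)"
    proof (rule pmf_exp_mono[where B="exp l" and B'="1 + \<bar>exp l - 1\<bar>"])
      fix x assume x: "x \<in> set_pmf (p i)"
      show "exp (l * g x) \<le> 1 + (exp l - 1) * g x" using g01[OF i x] by (intro exp_lin_bound) auto
      show "\<bar>exp (l * g x)\<bar> \<le> exp l" using egb[OF i x] by auto
      have "\<bar>(exp l - 1) * g x\<bar> \<le> \<bar>exp l - 1\<bar>"
        using g01[OF i x] by (auto simp: abs_mult intro: mult_left_le)
      thus "\<bar>1 + (exp l - 1) * g x\<bar> \<le> 1 + \<bar>exp l - 1\<bar>" by linarith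
    qed
    also have "\<dots> = 1 + (exp l - 1) * measure_pmf.expectation (p i) g"
    proof -
      have int: "integrable (measure_pmf (p i)) g"
        using g01[OF i] by (intro pmf_integrable_AE_bdd[where B=1]) auto
      show ?thesis using int by (simp add: Bochner_Integration.integral_add)
    qed
    also have "\<dots> \<le> exp ((exp l - 1) * measure_pmf.expectation (p i) g)"
      by (rule exp_ge_add_one_self)
    finally show "measure_pmf.expectation (p i) (\<lambda>x. exp (l * g x)) \<le> exp ((exp l - 1) * measure_pmf.expectation (p i) g)" .
  qed
  also have "(\<Prod>i\<in>I. exp ((exp l - 1) * measure_pmf.expectation (p i) g)) =
             exp ((exp l - 1) * (\<Sum>i\<in>I. measure_pmf.expectation (p i) g))"
    by (simp add: exp_sum fin sum_distrib_left)
  finally show ?thesis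
    by (simp add: exp_add[symmetric] mult_left_mono)
qed

lemma exp_Pi_split:
  fixes \<alpha> :: "'b \<Rightarrow> real" and \<beta> :: "('i \<Rightarrow> 'b) \<Rightarrow> real"
  assumes fin: "finite I" and r: "r \<in> I"
    and bind: "\<And>\<sigma> y. \<beta> (\<sigma>(r := y)) = \<beta> \<sigma>"
    and a0: "\<And>x. 0 \<le> \<alpha> x" and a1: "\<And>x. \<alpha> x \<le> A"
    and b0: "\<And>x. 0 \<le> \<beta> x" and b1: "\<And>x. \<beta> x \<le> B"
  shows "measure_pmf.expectation (Pi_pmf I d p) (\<lambda>\<sigma>. \<alpha> (\<sigma> r) * \<beta> \<sigma>) =
         measure_pmf.expectation (p r) \<alpha> * measure_pmf.expectation (Pi_pmf (I - {r}) d p) \<beta>"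
proof -
  have I: "I = insert r (I - {r})" using r by auto
  have "Pi_pmf I d p = map_pmf (\<lambda>(y,f). f(r:=y)) (pair_pmf (p r) (Pi_pmf (I - {r}) d p))"
    by (subst I, rule Pi_pmf_insert) (use fin in auto)
  hence "measure_pmf.expectation (Pi_pmf I d p) (\<lambda>\<sigma>. \<alpha> (\<sigma> r) * \<beta> \<sigma>) =
         measure_pmf.expectation (pair_pmf (p r) (Pi_pmf (I - {r}) d p)) (\<lambda>x. \<alpha> (fst x) * \<beta> (snd x))"
    by (simp add: case_prod_beta bind)
  also have "\<dots> = measure_pmf.expectation (p r) \<alpha> * measure_pmf.expectation (Pi_pmf (I - {r}) d p) \<beta>"
    by (rule exp_pair_prod[OF a0 a1 b0 b1])
  finally show ?thesis .
qed



locale NC =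
  fixes V :: "'a set" and E :: "'a set set" and w :: "'a set \<Rightarrow> real"
    and Alg :: "'a set \<times> 'a set set \<Rightarrow> 'a set set"
    and eps pv pe :: real
  assumes eps0: "0 < eps" and eps1: "eps \<le> 1 / exp 1"
    and pv0: "0 < pv" and pv1: "pv \<le> 1" and pe0: "0 < pe" and pe1: "pe \<le> 1"
    and sg: "simple_graph V E"
    and alg: "\<And>H. H \<in> set_pmf (realization pv pe V E) \<Longrightarrow> is_max_weight_matching w H (Alg H)"
begin

abbreviation "\<rho> \<equiv> realization pv pe V E"
abbreviation "S \<equiv> samples eps pv pe V E"
abbreviation "R \<equiv> Rrounds eps pv pe"
abbreviation "N \<equiv> Nset Alg eps pv pe V E"
abbreviation "q \<equiv> qprob Alg pv pe V E"
abbreviation "\<tau> \<equiv> tau eps pv pe"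
abbreviation "c \<equiv> pv\<^sup>2 * pe"
abbreviation "L1 \<equiv> ln (1 / eps)"
abbreviation "fr \<equiv> freq Alg eps pv pe"
abbreviation "M \<equiv> (\<lambda>v. max (qN Alg eps pv pe V E v) eps)"
abbreviation "CV \<equiv> Pi_pmf V False (\<lambda>_. bernoulli_pmf pv)"
abbreviation "CE \<equiv> Pi_pmf E False (\<lambda>_. bernoulli_pmf pe)"
abbreviation "mk \<equiv> (\<lambda>(cv, ce). ({v \<in> V. cv v}, {e \<in> E. (\<forall>v\<in>e. cv v) \<and> ce e}))"

lemma finV: "finite V" using sg by (simp add: simple_graph_def)

lemma edgeE: "e \<in> E \<Longrightarrow> \<exists>a b. a \<in> V \<and> b \<in> V \<and> a \<noteq> b \<and> e = {a, b}"
  using sg by (simp add: simple_graph_def)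

lemma finE: "finite E"
proof -
  have "E \<subseteq> Pow V" using edgeE by blast
  thus ?thesis using finV finite_subset by blast
qed

lemma rho_def': "\<rho> = map_pmf mk (pair_pmf CV CE)"
  by (simp add: realization_def)

lemma L1_ge: "1 \<le> L1"
proof -
  have "exp 1 \<le> 1 / eps" using eps1 eps0 by (simp add: field_simps)
  hence "ln (exp 1) \<le> ln (1 / eps)" by (subst ln_le_cancel_iff) (use eps0 in auto)
  thus ?thesis by simp
qed

lemma eps_le: "eps \<le> 1/2"
proof -
  have "2 \<le> exp (1::real)" using exp_ge_add_one_self[of 1] by simp
  hence "1 / exp 1 \<le> (1::real) / 2" by (intro divide_left_mono) auto
  thus ?thesis using eps1 by linarith
qed

lemma c_pos: "0 < c" using pv0 pe0 by simp
lemma c_le: "c \<le> 1"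
proof -
  have "pv\<^sup>2 \<le> 1" using pv0 pv1 by (simp add: power_le_one)
  thus ?thesis using pe1 pe0 mult_mono[of "pv\<^sup>2" 1 pe 1] by simp
qed

lemma tau_eq: "\<tau> = eps ^ 3 * c / (20 * L1)"
  by (simp add: tau_def)

lemma tau_pos: "0 < \<tau>"
proof -
  have "0 < eps ^ 3 * c" using eps0 c_pos by simp
  moreover have "0 < 20 * L1" using L1_ge by simp
  ultimately show ?thesis unfolding tau_eq by (rule divide_pos_pos)
qed

lemma R_ge: "2000 * L1 / (eps ^ 4 * c) \<le> real R"
proof -
  define L where "L = ln (1 / (eps * c))"
  have "eps * c \<le> eps" using c_le eps0 by (simp add: mult_left_le)
  hence "1 / eps \<le> 1 / (eps * c)" using eps0 c_pos by (intro divide_left_mono) auto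
  hence "L1 \<le> L" unfolding L_def using eps0 c_pos by (subst ln_le_cancel_iff) auto
  hence L1: "1 \<le> L" using L1_ge by linarith
  have pos: "0 < eps ^ 4 * c" using eps0 c_pos by simp
  have "2000 * L1 / (eps ^ 4 * c) \<le> 2000 * L1 * L / (eps ^ 4 * c)"
    using L1 L1_ge pos by (intro divide_right_mono) (auto intro: mult_left_le_one_le simp: mult_le_cancel_left1)
  also have "\<dots> \<le> real R"
    unfolding Rrounds_def L_def by (simp add: power2_eq_square mult.assoc) linarith
  finally show ?thesis .
qed

lemma R_pos: "1 \<le> real R"
proof -
  have "eps ^ 4 \<le> 1" using eps0 eps_le by (simp add: power_le_one)
  hence "eps ^ 4 * c \<le> 1" using mult_le_one[of "eps ^ 4" c] eps0 c_le c_pos by simp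
  moreover have "0 < eps ^ 4 * c" using eps0 c_pos by simp
  ultimately have "1 \<le> 2000 * L1 / (eps ^ 4 * c)" using L1_ge by (simp add: le_divide_eq)
  thus ?thesis using R_ge by linarith
qed

lemma tauR: "100 / eps \<le> \<tau> * real R"
proof -
  have "\<tau> * (2000 * L1 / (eps ^ 4 * c)) = 100 / eps"
    using L1_ge eps0 c_pos pv0 pe0 eps_le by (simp add: tau_eq field_simps power_def)
  moreover have "\<tau> * (2000 * L1 / (eps ^ 4 * c)) \<le> \<tau> * real R"
    using R_ge tau_pos by (intro mult_left_mono) auto
  ultimately show ?thesis by linarith
qed

lemma eps3R: "2000 / eps \<le> eps ^ 3 * real R"
proof -
  have "eps ^ 3 * (2000 * L1 / (eps ^ 4 * c)) = 2000 * L1 / (eps * c)"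
    using eps0 c_pos by (simp add: field_simps power_def)
  also have "\<dots> \<ge> 2000 / eps"
  proof -
    have "eps * c \<le> eps * L1" using c_le L1_ge eps0 by (intro mult_left_mono) auto
    hence "2000 / (eps * L1) \<le> 2000 / (eps * c)" using eps0 c_pos L1_ge eps_le by (intro divide_left_mono) (auto intro!: mult_pos_pos)
    moreover have "2000 * L1 / (eps * c) = 2000 / (eps * c) * L1" by simp
    moreover have "2000 / eps \<le> 2000 / (eps * c)" using c_le c_pos eps0
      by (intro divide_left_mono) (auto intro: mult_left_le)
    moreover have "2000 / (eps * c) \<le> 2000 * L1 / (eps * c)" using L1_ge eps0 c_pos
      by (intro divide_right_mono) auto
    ultimately show ?thesis by linarith
  qed
  finally have "2000 / eps \<le> eps ^ 3 * (2000 * L1 / (eps ^ 4 * c))" .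
  also have "\<dots> \<le> eps ^ 3 * real R" using R_ge eps0 by (intro mult_left_mono) auto
  finally show ?thesis .
qed

end

context NC begin
definition X :: "'a set \<Rightarrow> 'a realz \<Rightarrow> real" where
  "X e H = (if e \<in> Alg H then 1 else 0)"

lemma X_01: "0 \<le> X e H" "X e H \<le> 1" by (auto simp: X_def)

lemma supp_rho:
  assumes "H \<in> set_pmf \<rho>"
  shows "Alg H \<subseteq> snd H" "snd H \<subseteq> E" "is_matching (Alg H)"
proof -
  show "Alg H \<subseteq> snd H" "is_matching (Alg H)" using alg[OF assms] by (auto simp: is_max_weight_matching_def)
  have "H \<in> mk ` (set_pmf (pair_pmf CV CE))" using assms by (simp add: rho_def')
  thus "snd H \<subseteq> E" by auto
qed

lemma matching_deg:
  assumes "is_matching Mt" "finite Mt"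
  shows "card {e\<in>Mt. v \<in> e} \<le> 1"
proof -
  have "\<forall>x\<in>{e\<in>Mt. v \<in> e}. \<forall>y\<in>{e\<in>Mt. v \<in> e}. x = y"
    using assms(1) unfolding is_matching_def by blast
  thus ?thesis using card_le_Suc0_iff_eq[of "{e\<in>Mt. v \<in> e}"] assms(2) by simp
qed

definition Zw :: "'a \<Rightarrow> 'a realz \<Rightarrow> real" where
  "Zw v H = (\<Sum>e'\<in>{e'\<in>N. v \<in> e'}. X e' H)"

lemma N_sub: "N \<subseteq> E" by (auto simp: Nset_def)

lemma finN: "finite N" using N_sub finE finite_subset by blast

lemma finAlg: "H \<in> set_pmf \<rho> \<Longrightarrow> finite (Alg H)"
  using supp_rho(1,2)[of H] finE by (meson finite_subset order_trans)

lemma Zw_01: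
  assumes "H \<in> set_pmf \<rho>"
  shows "0 \<le> Zw v H" "Zw v H \<le> 1"
proof -
  show "0 \<le> Zw v H" unfolding Zw_def by (intro sum_nonneg) (auto simp: X_def)
  have fA: "finite (Alg H)" by (rule finAlg[OF assms])
  have "Zw v H = (\<Sum>e'\<in>{e'\<in>N. v \<in> e'}. if e' \<in> Alg H then 1 else 0)" by (simp add: Zw_def X_def)
  also have "\<dots> = real (card {e'\<in>{e'\<in>N. v \<in> e'}. e' \<in> Alg H})"
    by (subst sum.inter_filter[symmetric]) (use finN in auto)
  also have "\<dots> \<le> real (card {e\<in>Alg H. v \<in> e})"
    by (intro of_nat_mono card_mono) (use fA in auto)
  also have "\<dots> \<le> 1" using matching_deg[OF supp_rho(3)[OF assms] fA] by simp
  finally show "Zw v H \<le> 1" .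
qed

lemma supp_S:
  assumes "\<sigma> \<in> set_pmf S" "r < R"
  shows "\<sigma> r \<in> set_pmf \<rho>"
  using set_Pi_pmf_subset'[of "{..<R}" "({}, {})" "\<lambda>_. \<rho>"] assms
  by (auto simp: samples_def PiE_dflt_def)

lemma exp_X: "measure_pmf.expectation \<rho> (X e) = q e"
proof -
  have "X e = indicator {H. e \<in> Alg H}" by (auto simp: X_def indicator_def)
  thus ?thesis by (simp add: qprob_def)
qed

lemma exp_Zw: "measure_pmf.expectation \<rho> (Zw v) = qN Alg eps pv pe V E v"
  unfolding Zw_def qN_def
  by (subst Bochner_Integration.integral_sum)
     (auto simp: exp_X intro!: pmf_integrable_bdd[where B=1] simp: X_def)

lemma fr_sum: "fr \<sigma> e = (\<Sum>r<R. X e (\<sigma> r)) / real R"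
proof -
  have "(\<Sum>r<R. X e (\<sigma> r)) = (\<Sum>r\<in>{..<R}. if e \<in> Alg (\<sigma> r) then 1 else 0)" by (simp add: X_def)
  also have "\<dots> = real (card {r\<in>{..<R}. e \<in> Alg (\<sigma> r)})"
    by (subst sum.inter_filter[symmetric]) auto
  finally show ?thesis by (simp add: freq_def)
qed

lemma fr_nonneg: "0 \<le> fr \<sigma> e" by (simp add: freq_def)

lemma exp_S_comp: "r < R \<Longrightarrow> measure_pmf.expectation S (\<lambda>\<sigma>. (g::_\<Rightarrow>real) (\<sigma> r)) = measure_pmf.expectation \<rho> g"
proof -
  assume r: "r < R"
  have "measure_pmf.expectation S (\<lambda>\<sigma>. g (\<sigma> r)) = measure_pmf.expectation (map_pmf (\<lambda>\<sigma>. \<sigma> r) S) g"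
    by simp
  also have "map_pmf (\<lambda>\<sigma>. \<sigma> r) S = \<rho>" unfolding samples_def by (subst Pi_pmf_component) (use r in auto)
  finally show ?thesis .
qed

lemma exp_fr: "measure_pmf.expectation S (\<lambda>\<sigma>. fr \<sigma> e) = q e"
proof -
  have "measure_pmf.expectation S (\<lambda>\<sigma>. \<Sum>r<R. X e (\<sigma> r)) = (\<Sum>r<R. measure_pmf.expectation S (\<lambda>\<sigma>. X e (\<sigma> r)))"
    by (rule Bochner_Integration.integral_sum) (auto intro!: pmf_integrable_bdd[where B=1] simp: X_def)
  also have "\<dots> = (\<Sum>r<R. measure_pmf.expectation \<rho> (X e))"
    by (intro sum.cong refl exp_S_comp) auto
  finally have "measure_pmf.expectation S (\<lambda>\<sigma>. \<Sum>r<R. X e (\<sigma> r)) = real R * q e" by (simp add: exp_X)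
  thus ?thesis using R_pos by (simp add: fr_sum)
qed

lemma exp_rho_iter:
  fixes h :: "'a realz \<Rightarrow> real"
  assumes "\<And>x. 0 \<le> h x" "\<And>x. h x \<le> B"
  shows "measure_pmf.expectation \<rho> h =
         measure_pmf.expectation CV (\<lambda>cv. measure_pmf.expectation CE (\<lambda>ce. h (mk (cv, ce))))"
proof -
  have "measure_pmf.expectation \<rho> h = measure_pmf.expectation (pair_pmf CV CE) (\<lambda>x. h (mk x))"
    by (simp add: rho_def')
  also have "\<dots> = measure_pmf.expectation CV (\<lambda>cv. measure_pmf.expectation CE (\<lambda>ce. h (mk (cv, ce))))"
    by (rule exp_pair_iter[where B=B]) (use assms in auto)
  finally show ?thesis .
qed

lemma exp_CE_comp: "e \<in> E \<Longrightarrow> measure_pmf.expectation CE (\<lambda>ce. (g::_\<Rightarrow>real) (ce e)) = measure_pmf.expectation (bernoulli_pmf pe) g"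
proof -
  assume e: "e \<in> E"
  have "measure_pmf.expectation CE (\<lambda>ce. g (ce e)) = measure_pmf.expectation (map_pmf (\<lambda>ce. ce e) CE) g"
    by simp
  also have "map_pmf (\<lambda>ce. ce e) CE = bernoulli_pmf pe" by (subst Pi_pmf_component) (use finE e in auto)
  finally show ?thesis .
qed

lemma prob_edge:
  assumes "e \<in> E"
  shows "measure_pmf.expectation \<rho> (\<lambda>H. if e \<in> snd H then 1 else 0) = c"
proof -
  obtain a b where ab: "a \<in> V" "b \<in> V" "a \<noteq> b" "e = {a, b}" using edgeE[OF assms] by blast
  have "measure_pmf.expectation \<rho> (\<lambda>H. if e \<in> snd H then 1 else 0) =
        measure_pmf.expectation CV (\<lambda>cv. measure_pmf.expectation CE (\<lambda>ce. (if cv a \<and> cv b then 1 else 0) * (if ce e then 1 else 0::real)))"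
  proof -
    have "measure_pmf.expectation \<rho> (\<lambda>H. if e \<in> snd H then 1 else 0::real) =
       measure_pmf.expectation CV (\<lambda>cv. measure_pmf.expectation CE (\<lambda>ce. (\<lambda>H. if e \<in> snd H then 1 else 0::real) (mk (cv, ce))))"
      by (rule exp_rho_iter[where B=1]) auto
    also have "\<dots> = measure_pmf.expectation CV (\<lambda>cv. measure_pmf.expectation CE (\<lambda>ce. (if cv a \<and> cv b then 1 else 0) * (if ce e then 1 else 0::real)))"
      by (rule arg_cong[where f="measure_pmf.expectation CV"], rule ext, rule arg_cong[where f="measure_pmf.expectation CE"], rule ext)
         (use assms ab in auto)
    finally show ?thesis .
  qed
  also have "\<dots> = measure_pmf.expectation CV (\<lambda>cv. (if cv a \<and> cv b then 1 else 0) * pe)"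
    using exp_CE_comp[OF assms, of "\<lambda>x. if x then 1 else 0"] pe0 pe1 by simp
  also have "\<dots> = measure_pmf.expectation CV (\<lambda>cv. \<Prod>z\<in>{a,b}. (\<lambda>z x. if x then 1 else 0 :: real) z (cv (id z))) * pe"
  proof -
    have "(\<lambda>cv. (if cv a \<and> cv b then 1 else 0) * pe) = (\<lambda>cv. (\<Prod>z\<in>{a,b}. (\<lambda>z x. if x then 1 else 0 :: real) z (cv (id z))) * pe)"
      using ab by (auto simp: fun_eq_iff)
    thus ?thesis by simp
  qed
  also have "measure_pmf.expectation CV (\<lambda>cv. \<Prod>z\<in>{a,b}. (\<lambda>z x. if x then 1 else 0 :: real) z (cv (id z))) =
        (\<Prod>z\<in>{a,b}. measure_pmf.expectation (bernoulli_pmf pv) (\<lambda>x. if x then 1 else 0 :: real))"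
    by (rule exp_Pi_prod_reindex[where C=1]) (use finV ab in auto)
  also have "\<dots> = pv * pv" using ab pv0 pv1 by simp
  finally show ?thesis by (simp add: power2_eq_square)
qed

end


lemma exp_half_le: "exp (1/2::real) \<le> 7/4"
  using exp_bound[of "1/2::real"] by (simp add: power2_eq_square)

lemma small_exp:
  fixes eps y :: real
  assumes "0 < eps" "25 / eps \<le> y"
  shows "exp (1/2 - y) \<le> eps"
proof -
  have y0: "0 < y" using assms by (smt (verit) divide_pos_pos)
  have "exp (1/2 - y) = exp (1/2) * exp (- y)" by (simp add: exp_add[symmetric])
  also have "exp (- y) \<le> 1 / (1 + y)"
  proof -
    have "1 + y \<le> exp y" by (rule exp_ge_add_one_self)
    thus ?thesis using y0 by (simp add: exp_minus field_simps)
  qed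
  hence "exp (1/2) * exp (- y) \<le> 7/4 * (1 / (1 + y))"
    using exp_half_le by (intro mult_mono) auto
  also have "\<dots> \<le> 7/4 * (1 / y)" using y0 by (intro mult_left_mono divide_left_mono) auto
  also have "1 / y \<le> eps / 25" using assms y0 by (simp add: field_simps)
  hence "7/4 * (1 / y) \<le> 7/4 * (eps / 25)" by simp
  also have "\<dots> \<le> eps" using assms by simp
  finally show ?thesis .
qed

context NC begin

definition Fw :: "(nat \<Rightarrow> 'a realz) \<Rightarrow> 'a \<Rightarrow> real" where
  "Fw \<sigma> v = (\<Sum>e'\<in>{e'\<in>N. v \<in> e'}. fr \<sigma> e')"

lemma Fw_sum: "Fw \<sigma> v = (\<Sum>j<R. Zw v (\<sigma> j)) / real R"
proof -
  have "Fw \<sigma> v = (\<Sum>e'\<in>{e'\<in>N. v \<in> e'}. (\<Sum>j<R. X e' (\<sigma> j)) / real R)"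
    by (simp add: Fw_def fr_sum)
  also have "\<dots> = (\<Sum>e'\<in>{e'\<in>N. v \<in> e'}. \<Sum>j<R. X e' (\<sigma> j)) / real R"
    by (simp add: sum_divide_distrib)
  also have "(\<Sum>e'\<in>{e'\<in>N. v \<in> e'}. \<Sum>j<R. X e' (\<sigma> j)) = (\<Sum>j<R. Zw v (\<sigma> j))"
    unfolding Zw_def by (rule sum.swap)
  finally show ?thesis .
qed

abbreviation "Srest r \<equiv> Pi_pmf ({..<R} - {r}) ({}, {}) (\<lambda>_. \<rho>)"

lemma split_rest:
  fixes g :: "'a realz \<Rightarrow> real"
  assumes r: "r < R" and g01: "\<And>H. H \<in> set_pmf \<rho> \<Longrightarrow> 0 \<le> g H \<and> g H \<le> 1" and l: "0 \<le> l"
  shows "measure_pmf.expectation S (\<lambda>\<sigma>. X e (\<sigma> r) * indicator {\<sigma>. t \<le> (\<Sum>j\<in>{..<R} - {r}. g (\<sigma> j))} \<sigma>)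
         \<le> q e * exp (- l * t + (exp l - 1) * ((real R - 1) * measure_pmf.expectation \<rho> g))"
proof -
  let ?A = "{\<sigma>. t \<le> (\<Sum>j\<in>{..<R} - {r}. g (\<sigma> j))}"
  have ind: "indicator ?A (\<sigma>(r := y)) = (indicator ?A \<sigma> :: real)" for \<sigma> y
  proof -
    have "(\<Sum>j\<in>{..<R} - {r}. g ((\<sigma>(r := y)) j)) = (\<Sum>j\<in>{..<R} - {r}. g (\<sigma> j))"
      by (intro sum.cong) auto
    thus ?thesis using X_01[of e "\<sigma> r"] by (simp add: indicator_def)
  qed
  have "measure_pmf.expectation S (\<lambda>\<sigma>. X e (\<sigma> r) * indicator ?A \<sigma>) =
        measure_pmf.expectation \<rho> (X e) * measure_pmf.expectation (Srest r) (indicator ?A)"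
    unfolding samples_def
    by (rule exp_Pi_split[where A=1 and B=1]) (use r ind in \<open>auto simp: X_def indicator_def\<close>)
  also have "measure_pmf.expectation (Srest r) (indicator ?A) = measure_pmf.prob (Srest r) ?A"
    by simp
  also have "\<dots> \<le> exp (- l * t + (exp l - 1) * (\<Sum>i\<in>{..<R} - {r}. measure_pmf.expectation \<rho> g))"
    by (rule chernoff_Pi) (use g01 l in auto)
  also have "(\<Sum>i\<in>{..<R} - {r}. measure_pmf.expectation \<rho> g) = (real R - 1) * measure_pmf.expectation \<rho> g"
  proof -
    have "card ({..<R} - {r}) = R - 1" using r by simp
    thus ?thesis using R_pos by (simp add: of_nat_diff)
  qed
  finally show ?thesis
    by (simp add: exp_X mult_left_mono qprob_def)
qed

lemma q_nonneg: "0 \<le> q e" by (simp add: qprob_def)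

lemma qN_nonneg: "0 \<le> qN Alg eps pv pe V E v"
  unfolding qN_def by (intro sum_nonneg q_nonneg)

lemma M_ge: "eps \<le> M v" "qN Alg eps pv pe V E v \<le> M v" by auto

lemma T_a:
  assumes e: "e \<in> N" and r: "r < R"
  shows "measure_pmf.expectation S (\<lambda>\<sigma>. X e (\<sigma> r) * (if 2 * \<tau> < fr \<sigma> e then 1 else 0)) \<le> eps * q e"
proof -
  define t where "t = 2 * \<tau> * real R - 1"
  let ?A = "{\<sigma>. t \<le> (\<Sum>j\<in>{..<R} - {r}. X e (\<sigma> j))}"
  have pw: "X e (\<sigma> r) * (if 2 * \<tau> < fr \<sigma> e then 1 else 0) \<le> X e (\<sigma> r) * indicator ?A \<sigma>" for \<sigma>
  proof (cases "2 * \<tau> < fr \<sigma> e")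
    case True
    have "(\<Sum>j<R. X e (\<sigma> j)) = X e (\<sigma> r) + (\<Sum>j\<in>{..<R} - {r}. X e (\<sigma> j))"
      using r by (subst sum.remove[of _ r]) auto
    moreover have "2 * \<tau> * real R < (\<Sum>j<R. X e (\<sigma> j))"
      using True R_pos by (simp add: fr_sum field_simps)
    ultimately have "t \<le> (\<Sum>j\<in>{..<R} - {r}. X e (\<sigma> j))" using X_01[of e "\<sigma> r"] unfolding t_def by linarith
    thus ?thesis using X_01[of e "\<sigma> r"] by (simp add: indicator_def)
  next
    case False thus ?thesis using X_01[of e "\<sigma> r"] by (simp add: indicator_def)
  qed
  have "measure_pmf.expectation S (\<lambda>\<sigma>. X e (\<sigma> r) * (if 2 * \<tau> < fr \<sigma> e then 1 else 0))
        \<le> measure_pmf.expectation S (\<lambda>\<sigma>. X e (\<sigma> r) * indicator ?A \<sigma>)"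
    by (rule pmf_exp_mono[where B=1 and B'=1]) (use pw in \<open>auto simp: X_def indicator_def\<close>)
  also have "\<dots> \<le> q e * exp (- (1/2) * t + (exp (1/2) - 1) * ((real R - 1) * measure_pmf.expectation \<rho> (X e)))"
    by (rule split_rest) (use r in \<open>auto simp: X_def\<close>)
  also have "\<dots> \<le> q e * eps"
  proof (rule mult_left_mono[OF _ q_nonneg])
    have qt: "q e < \<tau>" using e by (auto simp: Nset_def)
    have h1: "(real R - 1) * q e \<le> real R * \<tau>"
      using qt q_nonneg[of e] R_pos tau_pos by (intro mult_mono) auto
    have h2: "exp (1/2) - 1 \<le> (3/4::real)" using exp_half_le by simp
    have h3: "0 \<le> (real R - 1) * q e" using R_pos q_nonneg[of e] by simp
    have "(exp (1/2) - 1) * ((real R - 1) * q e) \<le> 3/4 * (real R * \<tau>)"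
      by (rule mult_mono[OF h2 h1]) (use h3 in auto)
    hence "- (1/2) * t + (exp (1/2) - 1) * ((real R - 1) * measure_pmf.expectation \<rho> (X e)) \<le> 1/2 - \<tau> * real R / 4"
      unfolding t_def exp_X by (simp add: algebra_simps)
    hence "exp (- (1/2) * t + (exp (1/2) - 1) * ((real R - 1) * measure_pmf.expectation \<rho> (X e))) \<le> exp (1/2 - \<tau> * real R / 4)"
      by simp
    also have "\<dots> \<le> eps"
      by (rule small_exp) (use eps0 tauR in auto)
    finally show "exp (- (1/2) * t + (exp (1/2) - 1) * ((real R - 1) * measure_pmf.expectation \<rho> (X e))) \<le> eps" .
  qed
  finally show ?thesis by (simp add: mult.commute)
qed

lemma T_b1:
  assumes r: "r < R"
  shows "measure_pmf.expectation S (\<lambda>\<sigma>. X e (\<sigma> r) * (if (1 + eps) * M v < Fw \<sigma> v then 1 else 0)) \<le> eps * q e"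
proof -
  define m where "m = M v"
  define t where "t = (1 + eps) * m * real R - 1"
  let ?A = "{\<sigma>. t \<le> (\<Sum>j\<in>{..<R} - {r}. Zw v (\<sigma> j))}"
  have pw: "X e (\<sigma> r) * (if (1 + eps) * M v < Fw \<sigma> v then 1 else 0) \<le> X e (\<sigma> r) * indicator ?A \<sigma>"
    if \<sigma>: "\<sigma> \<in> set_pmf S" for \<sigma>
  proof (cases "(1 + eps) * M v < Fw \<sigma> v")
    case True
    have "(\<Sum>j<R. Zw v (\<sigma> j)) = Zw v (\<sigma> r) + (\<Sum>j\<in>{..<R} - {r}. Zw v (\<sigma> j))"
      using r by (subst sum.remove[of _ r]) auto
    moreover have "(1 + eps) * m * real R < (\<Sum>j<R. Zw v (\<sigma> j))"
      using True R_pos by (simp add: Fw_sum field_simps m_def)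
    moreover have "Zw v (\<sigma> r) \<le> 1" using Zw_01(2)[OF supp_S[OF \<sigma> r]] .
    ultimately have "t \<le> (\<Sum>j\<in>{..<R} - {r}. Zw v (\<sigma> j))" unfolding t_def by linarith
    thus ?thesis using X_01[of e "\<sigma> r"] by (simp add: indicator_def)
  next
    case False thus ?thesis using X_01[of e "\<sigma> r"] by (simp add: indicator_def)
  qed
  have "measure_pmf.expectation S (\<lambda>\<sigma>. X e (\<sigma> r) * (if (1 + eps) * M v < Fw \<sigma> v then 1 else 0))
        \<le> measure_pmf.expectation S (\<lambda>\<sigma>. X e (\<sigma> r) * indicator ?A \<sigma>)"
    by (rule pmf_exp_mono[where B=1 and B'=1]) (use pw in \<open>auto simp: X_def indicator_def\<close>)
  also have "\<dots> \<le> q e * exp (- (eps/2) * t + (exp (eps/2) - 1) * ((real R - 1) * measure_pmf.expectation \<rho> (Zw v)))"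
    by (rule split_rest) (use r eps0 Zw_01 in auto)
  also have "\<dots> \<le> q e * eps"
  proof (rule mult_left_mono[OF _ q_nonneg])
    define Q where "Q = qN Alg eps pv pe V E v"
    have Q0: "0 \<le> Q" "Q \<le> m" using qN_nonneg M_ge by (auto simp: Q_def m_def)
    have me: "eps \<le> m" by (simp add: m_def)
    have h1: "(real R - 1) * Q \<le> real R * m"
      using Q0 R_pos by (intro mult_mono) auto
    have h2: "exp (eps/2) - 1 \<le> eps/2 + eps^2/4"
      using exp_bound[of "eps/2"] eps0 eps_le by (simp add: power2_eq_square)
    have h3: "0 \<le> (real R - 1) * Q" using R_pos Q0 by simp
    have h4: "(exp (eps/2) - 1) * ((real R - 1) * Q) \<le> (eps/2 + eps^2/4) * (real R * m)"
      by (rule mult_mono[OF h2 h1]) (use h3 eps0 in auto)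
    have h5: "eps ^ 3 * real R \<le> eps ^ 2 * m * real R"
    proof -
      have "eps ^ 3 = eps ^ 2 * eps" by (simp add: power_def)
      also have "\<dots> \<le> eps ^ 2 * m" using me by (intro mult_left_mono) auto
      finally show ?thesis using R_pos by (intro mult_right_mono) auto
    qed
    have "- (eps/2) * t + (exp (eps/2) - 1) * ((real R - 1) * Q) \<le> eps/2 - eps ^ 2 * m * real R / 4"
      using h4 unfolding t_def by (simp add: algebra_simps power2_eq_square)
    also have "\<dots> \<le> 1/2 - eps ^ 3 * real R / 4" using h5 eps_le by simp
    finally have "exp (- (eps/2) * t + (exp (eps/2) - 1) * ((real R - 1) * Q)) \<le> exp (1/2 - eps ^ 3 * real R / 4)"
      by simp
    also have "\<dots> \<le> eps"
    proof (rule small_exp)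
      show "0 < eps" by (rule eps0)
      have "100 / eps \<le> 500 / eps" using eps0 by (simp add: divide_right_mono)
      have "25 / eps \<le> 500 / eps" using eps0 by (intro divide_right_mono) auto
      thus "25 / eps \<le> eps ^ 3 * real R / 4" using eps3R by simp
    qed
    finally show "exp (- (eps/2) * t + (exp (eps/2) - 1) * ((real R - 1) * measure_pmf.expectation \<rho> (Zw v))) \<le> eps"
      by (simp add: exp_Zw Q_def)
  qed
  finally show ?thesis by (simp add: mult.commute)
qed

end


context NC begin

definition yv :: "(nat \<Rightarrow> 'a realz) \<Rightarrow> 'a set \<Rightarrow> real" where
  "yv \<sigma> e' = (if e' \<in> EQ Alg eps pv pe \<sigma> \<inter> N then min (fr \<sigma> e' / c) (2 * \<tau> / c) else 0)"

lemma xt_eq: "xtilde Alg eps pv pe V E \<sigma> H e' = (if e' \<in> snd H then yv \<sigma> e' else 0)"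
  by (auto simp: xtilde_def yv_def)

lemma yv_nonneg: "0 \<le> yv \<sigma> e'"
  using fr_nonneg[of \<sigma> e'] c_pos tau_pos by (auto simp: yv_def)

lemma yv_le: "yv \<sigma> e' \<le> 2 * \<tau> / c"
  using tau_pos c_pos by (auto simp: yv_def)

lemma yv_le_fr: "yv \<sigma> e' \<le> (if e' \<in> N then fr \<sigma> e' / c else 0)"
  using fr_nonneg[of \<sigma> e'] c_pos by (auto simp: yv_def)

definition Zs :: "'a \<Rightarrow> 'a \<Rightarrow> 'a set" where
  "Zs vw u = {z \<in> V. z \<noteq> u \<and> z \<noteq> vw \<and> {vw, z} \<in> E}"

lemma Zs_fin: "finite (Zs vw u)" using finV by (simp add: Zs_def)



lemma Zs_p2:
  assumes "e = {vw, u}" "vw \<noteq> u"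
  shows "e \<notin> (\<lambda>z. {vw, z}) ` Zs vw u"
proof
  assume "e \<in> (\<lambda>z. {vw, z}) ` Zs vw u"
  then obtain z where z: "z \<in> Zs vw u" and ez: "e = {vw, z}" by blast
  have "{vw, u} = {vw, z}" using ez assms(1) by simp
  hence "vw = vw \<and> u = z \<or> vw = z \<and> u = vw" by (simp only: doubleton_eq_iff)
  hence "u = z" using assms(2) by blast
  thus False using z by (simp add: Zs_def)
qed

lemma Zs_p1:
  assumes eq: "e = {vw, u}" and eE: "e \<in> E" and wu: "vw \<noteq> u"
  shows "{e' \<in> E. vw \<in> e'} = insert e ((\<lambda>z. {vw, z}) ` Zs vw u)"
proof (intro equalityI subsetI)
  fix e' assume e': "e' \<in> {e' \<in> E. vw \<in> e'}"
  hence e'E: "e' \<in> E" and we: "vw \<in> e'" by auto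
  obtain a b where ab: "a \<in> V" "b \<in> V" "a \<noteq> b" "e' = {a, b}" using edgeE[OF e'E] by blast
  have "vw = a \<or> vw = b" using we ab(4) by simp
  hence "\<exists>z. z \<in> V \<and> z \<noteq> vw \<and> e' = {vw, z}"
  proof
    assume "vw = a" thus ?thesis using ab by blast
  next
    assume "vw = b" hence "e' = {vw, a}" using ab(4) by (simp add: insert_commute)
    thus ?thesis using ab \<open>vw = b\<close> by blast
  qed
  then obtain z where z: "z \<in> V" "z \<noteq> vw" "e' = {vw, z}" by blast
  show "e' \<in> insert e ((\<lambda>z. {vw, z}) ` Zs vw u)"
  proof (cases "z = u")
    case True thus ?thesis using z eq by simp
  next
    case False
    hence "z \<in> Zs vw u" using z e'E by (simp add: Zs_def)
    thus ?thesis using z by blast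
  qed
next
  fix e' assume "e' \<in> insert e ((\<lambda>z. {vw, z}) ` Zs vw u)"
  hence "e' = e \<or> (\<exists>z\<in>Zs vw u. e' = {vw, z})" by blast
  thus "e' \<in> {e' \<in> E. vw \<in> e'}"
  proof
    assume "e' = e" thus ?thesis using eq eE by simp
  next
    assume "\<exists>z\<in>Zs vw u. e' = {vw, z}"
    then obtain z where "z \<in> Zs vw u" "e' = {vw, z}" by blast
    thus ?thesis by (simp add: Zs_def)
  qed
qed

lemma Zs_p3: "inj_on (\<lambda>z. {vw, z}) X0" by (auto simp: inj_on_def doubleton_eq_iff)
lemma Zs_p4: "u \<notin> Zs vw u" "vw \<notin> Zs vw u" by (auto simp: Zs_def)
lemma Zs_p5: "z \<in> Zs vw u \<Longrightarrow> {vw, z} \<in> E" by (simp add: Zs_def)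

lemma xv_split:
  assumes "e = {vw, u}" "e \<in> E" "vw \<noteq> u"
  shows "xtilde_v Alg eps pv pe V E \<sigma> H vw =
         xtilde Alg eps pv pe V E \<sigma> H e + (\<Sum>z\<in>Zs vw u. xtilde Alg eps pv pe V E \<sigma> H {vw, z})"
proof -
  have "xtilde_v Alg eps pv pe V E \<sigma> H vw = (\<Sum>e'\<in>insert e ((\<lambda>z. {vw, z}) ` Zs vw u). xtilde Alg eps pv pe V E \<sigma> H e')"
    by (simp add: xtilde_v_def Zs_p1[OF assms])
  also have "\<dots> = xtilde Alg eps pv pe V E \<sigma> H e + (\<Sum>e'\<in>(\<lambda>z. {vw, z}) ` Zs vw u. xtilde Alg eps pv pe V E \<sigma> H e')"
    by (rule sum.insert) (use Zs_fin Zs_p2[OF assms(1,3)] in auto)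
  also have "(\<Sum>e'\<in>(\<lambda>z. {vw, z}) ` Zs vw u. xtilde Alg eps pv pe V E \<sigma> H e') = (\<Sum>z\<in>Zs vw u. xtilde Alg eps pv pe V E \<sigma> H {vw, z})"
    by (rule sum.reindex[OF Zs_p3, unfolded comp_def])
  finally show ?thesis .
qed

lemma pw_bound:
  assumes eq: "e = {vw, u}" and eE: "e \<in> E" and wo: "vw \<noteq> u" and lam: "0 \<le> lam"
  shows "(if e \<in> snd (mk (cv, ce)) \<and> T < pv * xtilde_v Alg eps pv pe V E \<sigma> (mk (cv, ce)) vw then 1 else 0)
     \<le> exp (lam * (2 * \<tau> / c) - lam * T / pv) * ((if cv u \<and> cv vw then 1 else 0) *
          ((if ce e then 1 else 0) * (\<Prod>z\<in>Zs vw u. exp (lam * (if cv z \<and> ce {vw, z} then yv \<sigma> {vw, z} else 0)))))"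
proof (cases "e \<in> snd (mk (cv, ce)) \<and> T < pv * xtilde_v Alg eps pv pe V E \<sigma> (mk (cv, ce)) vw")
  case True
  let ?H = "mk (cv, ce)"
  let ?Sg = "(\<Sum>z\<in>Zs vw u. (if cv z \<and> ce {vw, z} then yv \<sigma> {vw, z} else 0))"
  have cvw: "cv vw" "cv u" "ce e" using True eq by auto
  have xe: "xtilde Alg eps pv pe V E \<sigma> ?H e \<le> 2 * \<tau> / c"
    using yv_le[of \<sigma> e] tau_pos c_pos by (simp add: xt_eq)
  have xz: "xtilde Alg eps pv pe V E \<sigma> ?H {vw, z} = (if cv z \<and> ce {vw, z} then yv \<sigma> {vw, z} else 0)"
    if "z \<in> Zs vw u" for z
    using Zs_p5[OF that] cvw by (auto simp: xt_eq)
  have xv: "xtilde_v Alg eps pv pe V E \<sigma> ?H vw \<le> 2 * \<tau> / c + ?Sg"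
    using xv_split[OF eq eE wo, of \<sigma> ?H] xe xz by simp
  have "T / pv < xtilde_v Alg eps pv pe V E \<sigma> ?H vw" using True pv0 by (simp add: field_simps)
  hence "lam * (T / pv) \<le> lam * xtilde_v Alg eps pv pe V E \<sigma> ?H vw"
    using lam by (intro mult_left_mono) auto
  also have "\<dots> \<le> lam * (2 * \<tau> / c + ?Sg)" using xv lam by (intro mult_left_mono) auto
  finally have "0 \<le> lam * (2 * \<tau> / c) - lam * T / pv + lam * ?Sg" by (simp add: algebra_simps)
  hence "1 \<le> exp (lam * (2 * \<tau> / c) - lam * T / pv + lam * ?Sg)" by simp
  also have "\<dots> = exp (lam * (2 * \<tau> / c) - lam * T / pv) * (\<Prod>z\<in>Zs vw u. exp (lam * (if cv z \<and> ce {vw, z} then yv \<sigma> {vw, z} else 0)))"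
    by (simp add: exp_add sum_distrib_left exp_sum Zs_fin)
  finally show ?thesis using True cvw by simp
qed (auto intro!: mult_nonneg_nonneg prod_nonneg)

end


context NC begin

lemma edge_sub: "e \<in> E \<Longrightarrow> e \<subseteq> V" using edgeE by blast

lemma inner_CE:
  assumes eq: "e = {vw, u}" and eE: "e \<in> E" and wu: "vw \<noteq> u" and lam: "0 \<le> lam"
  shows "measure_pmf.expectation CE (\<lambda>ce. (if ce e then 1 else 0) *
            (\<Prod>z\<in>Zs vw u. exp (lam * (if cv z \<and> ce {vw, z} then yv \<sigma> {vw, z} else 0))))
         = pe * (\<Prod>z\<in>Zs vw u. 1 + pe * (if cv z then exp (lam * yv \<sigma> {vw, z}) - 1 else 0))"
proof -
  define g where "g = (\<lambda>z b. if z = u then (if b then 1 else 0) else exp (lam * (if cv z \<and> b then yv \<sigma> {vw, z} else 0)) :: real)"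
  define C where "C = exp (lam * (2 * \<tau> / c))"
  have C1: "1 \<le> C" unfolding C_def using lam tau_pos c_pos by simp
  have uZ: "u \<notin> Zs vw u" by (rule Zs_p4)
  have fun_eq: "(if ce e then 1 else 0) * (\<Prod>z\<in>Zs vw u. exp (lam * (if cv z \<and> ce {vw, z} then yv \<sigma> {vw, z} else 0)))
      = (\<Prod>z\<in>insert u (Zs vw u). g z (ce {vw, z}))" for ce
  proof -
    have "(\<Prod>z\<in>insert u (Zs vw u). g z (ce {vw, z})) = g u (ce {vw, u}) * (\<Prod>z\<in>Zs vw u. g z (ce {vw, z}))"
      by (rule prod.insert) (use Zs_fin uZ in auto)
    also have "(\<Prod>z\<in>Zs vw u. g z (ce {vw, z})) = (\<Prod>z\<in>Zs vw u. exp (lam * (if cv z \<and> ce {vw, z} then yv \<sigma> {vw, z} else 0)))"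
      by (intro prod.cong refl) (use uZ in \<open>auto simp: g_def\<close>)
    finally show ?thesis by (simp add: g_def eq)
  qed
  have "measure_pmf.expectation CE (\<lambda>ce. \<Prod>z\<in>insert u (Zs vw u). g z (ce {vw, z}))
        = (\<Prod>z\<in>insert u (Zs vw u). measure_pmf.expectation (bernoulli_pmf pe) (g z))"
  proof (rule exp_Pi_prod_reindex[where C=C])
    show "finite E" by (rule finE)
    show "finite (insert u (Zs vw u))" using Zs_fin by simp
    show "inj_on (\<lambda>z. {vw, z}) (insert u (Zs vw u))" by (rule Zs_p3)
    show "(\<lambda>z. {vw, z}) ` insert u (Zs vw u) \<subseteq> E" using eq eE Zs_p5 by auto
    fix z y
    show "0 \<le> g z y" by (simp add: g_def)
    have "exp (lam * (if cv z \<and> y then yv \<sigma> {vw, z} else 0)) \<le> C"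
      unfolding C_def using mult_left_mono[OF yv_le[of \<sigma> "{vw, z}"] lam] tau_pos c_pos lam
      by auto
    thus "g z y \<le> C" using C1 by (simp add: g_def)
  qed
  also have "\<dots> = measure_pmf.expectation (bernoulli_pmf pe) (g u) *
                  (\<Prod>z\<in>Zs vw u. measure_pmf.expectation (bernoulli_pmf pe) (g z))"
    by (rule prod.insert) (use Zs_fin uZ in auto)
  also have "measure_pmf.expectation (bernoulli_pmf pe) (g u) = pe"
    using pe0 pe1 by (simp add: g_def)
  also have "(\<Prod>z\<in>Zs vw u. measure_pmf.expectation (bernoulli_pmf pe) (g z)) =
             (\<Prod>z\<in>Zs vw u. 1 + pe * (if cv z then exp (lam * yv \<sigma> {vw, z}) - 1 else 0))"
    by (intro prod.cong refl) (use uZ pe0 pe1 in \<open>auto simp: g_def algebra_simps\<close>)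
  finally show ?thesis by (simp add: fun_eq)
qed

lemma outer_CV:
  assumes eq: "e = {vw, u}" and eE: "e \<in> E" and wu: "vw \<noteq> u" and lam: "0 \<le> lam"
  shows "measure_pmf.expectation CV (\<lambda>cv. (if cv u \<and> cv vw then 1 else 0) *
            (pe * (\<Prod>z\<in>Zs vw u. 1 + pe * (if cv z then exp (lam * yv \<sigma> {vw, z}) - 1 else 0))))
         = c * (\<Prod>z\<in>Zs vw u. 1 + pv * pe * (exp (lam * yv \<sigma> {vw, z}) - 1))"
proof -
  define h where "h = (\<lambda>z b. if z = u \<or> z = vw then (if b then 1 else 0)
      else 1 + pe * (if b then exp (lam * yv \<sigma> {vw, z}) - 1 else 0) :: real)"
  define C where "C = 1 + exp (lam * (2 * \<tau> / c))"
  have uZ: "u \<notin> Zs vw u" "vw \<notin> Zs vw u" by (rule Zs_p4)+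
  have uv: "u \<notin> insert vw (Zs vw u)" using uZ wu by auto
  have ey: "1 \<le> exp (lam * yv \<sigma> {vw, z})" for z using lam yv_nonneg[of \<sigma> "{vw,z}"] by simp
  have fun_eq: "(if cv u \<and> cv vw then 1 else 0) *
            (pe * (\<Prod>z\<in>Zs vw u. 1 + pe * (if cv z then exp (lam * yv \<sigma> {vw, z}) - 1 else 0)))
      = pe * (\<Prod>z\<in>insert u (insert vw (Zs vw u)). h z (cv (id z)))" for cv
  proof -
    have "(\<Prod>z\<in>insert u (insert vw (Zs vw u)). h z (cv (id z))) =
          h u (cv u) * (h vw (cv vw) * (\<Prod>z\<in>Zs vw u. h z (cv z)))"
      using Zs_fin uZ uv by (simp add: prod.insert)
    also have "(\<Prod>z\<in>Zs vw u. h z (cv z)) = (\<Prod>z\<in>Zs vw u. 1 + pe * (if cv z then exp (lam * yv \<sigma> {vw, z}) - 1 else 0))"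
      by (intro prod.cong refl) (use uZ in \<open>auto simp: h_def\<close>)
    finally show ?thesis by (simp add: h_def)
  qed
  have "measure_pmf.expectation CV (\<lambda>cv. \<Prod>z\<in>insert u (insert vw (Zs vw u)). h z (cv (id z)))
        = (\<Prod>z\<in>insert u (insert vw (Zs vw u)). measure_pmf.expectation (bernoulli_pmf pv) (h z))"
  proof (rule exp_Pi_prod_reindex[where C=C])
    show "finite V" by (rule finV)
    show "finite (insert u (insert vw (Zs vw u)))" using Zs_fin by simp
    show "inj_on id (insert u (insert vw (Zs vw u)))" by simp
    show "id ` insert u (insert vw (Zs vw u)) \<subseteq> V" using edge_sub[OF eE] eq by (auto simp: Zs_def)
    fix z y
    show "0 \<le> h z y" using ey[of z] pe0 by (auto simp: h_def)
    have e1: "exp (lam * yv \<sigma> {vw, z}) \<le> C - 1"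
      unfolding C_def using mult_left_mono[OF yv_le[of \<sigma> "{vw, z}"] lam] by simp
    have e2: "pe * (exp (lam * yv \<sigma> {vw, z}) - 1) \<le> exp (lam * yv \<sigma> {vw, z}) - 1"
      using pe1 pe0 ey[of z] mult_right_mono[of pe 1 "exp (lam * yv \<sigma> {vw, z}) - 1"] by simp
    have C1: "1 \<le> C" unfolding C_def by (simp add: add_increasing2)
    show "h z y \<le> C" unfolding h_def using e1 e2 C1 by auto
  qed
  also have "\<dots> = measure_pmf.expectation (bernoulli_pmf pv) (h u) *
      (measure_pmf.expectation (bernoulli_pmf pv) (h vw) *
       (\<Prod>z\<in>Zs vw u. measure_pmf.expectation (bernoulli_pmf pv) (h z)))"
    using Zs_fin uZ uv by (simp add: prod.insert)
  also have "measure_pmf.expectation (bernoulli_pmf pv) (h u) = pv"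
    using pv0 pv1 by (simp add: h_def)
  also have "measure_pmf.expectation (bernoulli_pmf pv) (h vw) = pv"
    using pv0 pv1 by (simp add: h_def)
  also have "(\<Prod>z\<in>Zs vw u. measure_pmf.expectation (bernoulli_pmf pv) (h z)) =
             (\<Prod>z\<in>Zs vw u. 1 + pv * pe * (exp (lam * yv \<sigma> {vw, z}) - 1))"
    by (intro prod.cong refl) (use uZ pv0 pv1 in \<open>auto simp: h_def algebra_simps\<close>)
  finally have "measure_pmf.expectation CV (\<lambda>cv. \<Prod>z\<in>insert u (insert vw (Zs vw u)). h z (cv (id z))) =
      pv * (pv * (\<Prod>z\<in>Zs vw u. 1 + pv * pe * (exp (lam * yv \<sigma> {vw, z}) - 1)))" .
  note X = this
  have "measure_pmf.expectation CV (\<lambda>cv. (if cv u \<and> cv vw then 1 else 0) *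
            (pe * (\<Prod>z\<in>Zs vw u. 1 + pe * (if cv z then exp (lam * yv \<sigma> {vw, z}) - 1 else 0))))
        = measure_pmf.expectation CV (\<lambda>cv. pe * (\<Prod>z\<in>insert u (insert vw (Zs vw u)). h z (cv (id z))))"
    by (simp only: fun_eq)
  also have "\<dots> = pe * measure_pmf.expectation CV (\<lambda>cv. \<Prod>z\<in>insert u (insert vw (Zs vw u)). h z (cv (id z)))"
    by (rule Bochner_Integration.integral_mult_right_zero)
  also have "\<dots> = pe * (pv * (pv * (\<Prod>z\<in>Zs vw u. 1 + pv * pe * (exp (lam * yv \<sigma> {vw, z}) - 1))))"
    by (simp only: X)
  finally show ?thesis by (simp add: power2_eq_square mult_ac)
qed

lemma B2_raw:
  assumes eq: "e = {vw, u}" and eE: "e \<in> E" and wu: "vw \<noteq> u" and lam: "0 \<le> lam"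
  shows "measure_pmf.expectation \<rho> (\<lambda>H. if e \<in> snd H \<and> T < pv * xtilde_v Alg eps pv pe V E \<sigma> H vw then 1 else 0)
         \<le> exp (lam * (2 * \<tau> / c) - lam * T / pv) * (c * (\<Prod>z\<in>Zs vw u. 1 + pv * pe * (exp (lam * yv \<sigma> {vw, z}) - 1)))"
proof -
  define K0 where "K0 = exp (lam * (2 * \<tau> / c) - lam * T / pv)"
  define C where "C = exp (lam * (2 * \<tau> / c))"
  define P where "P = (\<lambda>cv ce. \<Prod>z\<in>Zs vw u. exp (lam * (if cv z \<and> ce {vw, z} then yv \<sigma> {vw, z} else 0)))"
  define \<Phi>' where "\<Phi>' = (\<lambda>cv ce. K0 * ((if cv u \<and> cv vw then 1 else 0) * ((if ce e then 1 else 0) * P cv ce)))"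
  define ind where "ind = (\<lambda>H. if e \<in> snd H \<and> T < pv * xtilde_v Alg eps pv pe V E \<sigma> H vw then 1 else 0::real)"
  define Bd where "Bd = K0 * C ^ card (Zs vw u)"
  have P0: "0 \<le> P cv ce" for cv ce unfolding P_def by (intro prod_nonneg) auto
  have PB: "P cv ce \<le> C ^ card (Zs vw u)" for cv ce
  proof -
    have "P cv ce \<le> (\<Prod>z\<in>Zs vw u. C)"
      unfolding P_def C_def
    proof (intro prod_mono conjI)
      fix z
      show "0 \<le> exp (lam * (if cv z \<and> ce {vw, z} then yv \<sigma> {vw, z} else 0))" by simp
      have "lam * (if cv z \<and> ce {vw, z} then yv \<sigma> {vw, z} else 0) \<le> lam * (2 * \<tau> / c)"
        using lam yv_le[of \<sigma> "{vw, z}"] tau_pos c_pos by (intro mult_left_mono) auto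
      thus "exp (lam * (if cv z \<and> ce {vw, z} then yv \<sigma> {vw, z} else 0)) \<le> exp (lam * (2 * \<tau> / c))" by simp
    qed
    thus ?thesis by simp
  qed
  have K00: "0 \<le> K0" by (simp add: K0_def)
  have \<Phi>0: "0 \<le> \<Phi>' cv ce" for cv ce unfolding \<Phi>'_def using P0 K00 by auto
  have \<Phi>B: "\<Phi>' cv ce \<le> Bd" for cv ce
  proof -
    have "(if cv u \<and> cv vw then 1 else 0) * ((if ce e then 1 else 0) * P cv ce) \<le> C ^ card (Zs vw u)"
      using PB[of cv ce] P0[of cv ce] by auto
    thus ?thesis unfolding \<Phi>'_def Bd_def using K00 by (intro mult_left_mono) auto
  qed
  have "measure_pmf.expectation \<rho> ind = measure_pmf.expectation (pair_pmf CV CE) (\<lambda>x. ind (mk x))"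
    by (simp add: rho_def')
  also have "\<dots> \<le> measure_pmf.expectation (pair_pmf CV CE) (\<lambda>x. \<Phi>' (fst x) (snd x))"
  proof (rule pmf_exp_mono[where B=1 and B'=Bd])
    fix x :: "('a \<Rightarrow> bool) \<times> ('a set \<Rightarrow> bool)"
    obtain cv ce where x: "x = (cv, ce)" by (cases x)
    show "ind (mk x) \<le> \<Phi>' (fst x) (snd x)"
      unfolding x ind_def \<Phi>'_def P_def K0_def fst_conv snd_conv by (rule pw_bound[OF eq eE wu lam])
    show "\<bar>ind (mk x)\<bar> \<le> 1" by (simp add: ind_def)
    show "\<bar>\<Phi>' (fst x) (snd x)\<bar> \<le> Bd" using \<Phi>0 \<Phi>B by simp
  qed
  also have "\<dots> = measure_pmf.expectation CV (\<lambda>cv. measure_pmf.expectation CE (\<lambda>ce. \<Phi>' (fst (cv, ce)) (snd (cv, ce))))"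
    by (rule exp_pair_iter[where B=Bd]) (use \<Phi>0 \<Phi>B in auto)
  also have "\<dots> = measure_pmf.expectation CV (\<lambda>cv. K0 * ((if cv u \<and> cv vw then 1 else 0) *
            (pe * (\<Prod>z\<in>Zs vw u. 1 + pe * (if cv z then exp (lam * yv \<sigma> {vw, z}) - 1 else 0)))))"
  proof -
    have "measure_pmf.expectation CE (\<lambda>ce. \<Phi>' cv ce) = K0 * ((if cv u \<and> cv vw then 1 else 0) *
            (pe * (\<Prod>z\<in>Zs vw u. 1 + pe * (if cv z then exp (lam * yv \<sigma> {vw, z}) - 1 else 0))))" for cv
    proof -
      have "measure_pmf.expectation CE (\<lambda>ce. \<Phi>' cv ce) =
            K0 * ((if cv u \<and> cv vw then 1 else 0) * measure_pmf.expectation CE (\<lambda>ce. (if ce e then 1 else 0) * P cv ce))"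
        unfolding \<Phi>'_def by simp
      also have "measure_pmf.expectation CE (\<lambda>ce. (if ce e then 1 else 0) * P cv ce) =
                 pe * (\<Prod>z\<in>Zs vw u. 1 + pe * (if cv z then exp (lam * yv \<sigma> {vw, z}) - 1 else 0))"
        unfolding P_def by (rule inner_CE[OF eq eE wu lam])
      finally show ?thesis .
    qed
    thus ?thesis by simp
  qed
  also have "\<dots> = K0 * measure_pmf.expectation CV (\<lambda>cv. (if cv u \<and> cv vw then 1 else 0) *
            (pe * (\<Prod>z\<in>Zs vw u. 1 + pe * (if cv z then exp (lam * yv \<sigma> {vw, z}) - 1 else 0))))"
    by (rule Bochner_Integration.integral_mult_right_zero)
  also have "\<dots> = K0 * (c * (\<Prod>z\<in>Zs vw u. 1 + pv * pe * (exp (lam * yv \<sigma> {vw, z}) - 1)))"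
    by (simp only: outer_CV[OF eq eE wu lam])
  finally show ?thesis unfolding ind_def K0_def .
qed

end


lemma prod_one_plus_le_exp:
  fixes a :: "'z \<Rightarrow> real"
  assumes "finite Z" "\<And>z. z \<in> Z \<Longrightarrow> 0 \<le> a z"
  shows "(\<Prod>z\<in>Z. 1 + a z) \<le> exp (\<Sum>z\<in>Z. a z)"
proof -
  have "(\<Prod>z\<in>Z. 1 + a z) \<le> (\<Prod>z\<in>Z. exp (a z))"
    using assms(2) by (intro prod_mono) (auto intro: exp_ge_add_one_self add_nonneg_nonneg)
  also have "\<dots> = exp (\<Sum>z\<in>Z. a z)" by (simp add: exp_sum assms(1))
  finally show ?thesis .
qed

context NC begin

lemma sum_fr_Zs:
  assumes "e = {vw, u}" "e \<in> E" "vw \<noteq> u"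
  shows "(\<Sum>z\<in>Zs vw u. if {vw, z} \<in> N then fr \<sigma> {vw, z} else 0) \<le> Fw \<sigma> vw"
proof -
  have "(\<Sum>z\<in>Zs vw u. if {vw, z} \<in> N then fr \<sigma> {vw, z} else 0) =
        (\<Sum>e'\<in>(\<lambda>z. {vw, z}) ` Zs vw u. if e' \<in> N then fr \<sigma> e' else 0)"
    by (rule sum.reindex[OF Zs_p3, unfolded comp_def, symmetric])
  also have "\<dots> = (\<Sum>e'\<in>{e'\<in>(\<lambda>z. {vw, z}) ` Zs vw u. e' \<in> N}. fr \<sigma> e')"
    by (rule sum.inter_filter[symmetric]) (use Zs_fin in auto)
  also have "\<dots> \<le> (\<Sum>e'\<in>{e'\<in>N. vw \<in> e'}. fr \<sigma> e')"
    by (rule sum_mono2) (use finN fr_nonneg in auto)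
  finally show ?thesis by (simp add: Fw_def)
qed

lemma B2:
  assumes eN: "e \<in> N" and eq: "e = {vw, u}" and wu: "vw \<noteq> u"
    and Fb: "Fw \<sigma> vw \<le> (1 + eps) * M vw"
  shows "measure_pmf.expectation \<rho> (\<lambda>H. if e \<in> snd H \<and> (1 + 3 * eps) * M vw < pv * xtilde_v Alg eps pv pe V E \<sigma> H vw then 1 else 0)
         \<le> c * eps"
proof -
  have eE: "e \<in> E" using eN N_sub by auto
  define m where "m = M vw"
  define b where "b = 2 * \<tau> / c"
  define \<theta> where "\<theta> = eps / 2"
  define lam where "lam = \<theta> / b"
  define T where "T = (1 + 3 * eps) * m"
  define a where "a = (\<lambda>z. pv * pe * (exp (lam * yv \<sigma> {vw, z}) - 1))"
  have b0: "0 < b" unfolding b_def using tau_pos c_pos by simp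
  have b_eq: "b = eps ^ 3 / (10 * L1)"
    unfolding b_def tau_eq using c_pos L1_ge pv0 pe0 by (simp add: field_simps)
  have th0: "0 < \<theta>" "\<theta> \<le> 1" using eps0 eps_le by (auto simp: \<theta>_def)
  have lam0: "0 \<le> lam" unfolding lam_def using th0 b0 by simp
  have me: "eps \<le> m" by (simp add: m_def)
  have m0: "0 < m" using me eps0 by linarith
  have raw: "measure_pmf.expectation \<rho> (\<lambda>H. if e \<in> snd H \<and> T < pv * xtilde_v Alg eps pv pe V E \<sigma> H vw then 1 else 0)
         \<le> exp (lam * b - lam * T / pv) * (c * (\<Prod>z\<in>Zs vw u. 1 + a z))"
    using B2_raw[OF eq eE wu lam0, of T \<sigma>] by (simp add: a_def b_def)
  have ey: "1 \<le> exp (lam * yv \<sigma> {vw, z})" for z using lam0 yv_nonneg[of \<sigma> "{vw, z}"] by simp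
  have a0: "0 \<le> a z" for z unfolding a_def using ey[of z] pv0 pe0 by simp
  have prodle: "(\<Prod>z\<in>Zs vw u. 1 + a z) \<le> exp (\<Sum>z\<in>Zs vw u. a z)"
    by (rule prod_one_plus_le_exp) (use Zs_fin a0 in auto)
  have a_le: "a z \<le> (exp \<theta> - 1) / b * (pv * pe * yv \<sigma> {vw, z})" for z
  proof -
    have y: "0 \<le> yv \<sigma> {vw, z} / b" "yv \<sigma> {vw, z} / b \<le> 1"
    proof -
      have yb: "yv \<sigma> {vw, z} \<le> b" using yv_le[of \<sigma> "{vw, z}"] by (simp add: b_def)
      show "0 \<le> yv \<sigma> {vw, z} / b" using yv_nonneg[of \<sigma> "{vw, z}"] b0 by simp
      show "yv \<sigma> {vw, z} / b \<le> 1" using yb b0 by simp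
    qed
    have "lam * yv \<sigma> {vw, z} = \<theta> * (yv \<sigma> {vw, z} / b)" by (simp add: lam_def)
    hence "exp (lam * yv \<sigma> {vw, z}) - 1 \<le> (exp \<theta> - 1) * (yv \<sigma> {vw, z} / b)"
      using exp_lin_bound[OF y, of \<theta>] by simp
    hence "pv * pe * (exp (lam * yv \<sigma> {vw, z}) - 1) \<le> pv * pe * ((exp \<theta> - 1) * (yv \<sigma> {vw, z} / b))"
      using pv0 pe0 by (intro mult_left_mono) auto
    thus ?thesis unfolding a_def by (simp add: field_simps)
  qed
  have sumy: "(\<Sum>z\<in>Zs vw u. pv * pe * yv \<sigma> {vw, z}) \<le> (1 + eps) * m / pv"
  proof -
    have "(\<Sum>z\<in>Zs vw u. pv * pe * yv \<sigma> {vw, z}) \<le> (\<Sum>z\<in>Zs vw u. (if {vw, z} \<in> N then fr \<sigma> {vw, z} else 0) / pv)"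
    proof (rule sum_mono)
      fix z
      have "pv * pe * yv \<sigma> {vw, z} \<le> pv * pe * (if {vw, z} \<in> N then fr \<sigma> {vw, z} / c else 0)"
        using yv_le_fr[of \<sigma> "{vw, z}"] pv0 pe0 by (intro mult_left_mono) auto
      also have "\<dots> = (if {vw, z} \<in> N then fr \<sigma> {vw, z} else 0) / pv"
        using pv0 pe0 by (simp add: power2_eq_square field_simps)
      finally show "pv * pe * yv \<sigma> {vw, z} \<le> (if {vw, z} \<in> N then fr \<sigma> {vw, z} else 0) / pv" .
    qed
    also have "\<dots> = (\<Sum>z\<in>Zs vw u. (if {vw, z} \<in> N then fr \<sigma> {vw, z} else 0)) / pv"
      by (simp add: sum_divide_distrib)
    also have "\<dots> \<le> Fw \<sigma> vw / pv"
      using sum_fr_Zs[OF eq eE wu, of \<sigma>] pv0 by (intro divide_right_mono) auto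
    also have "\<dots> \<le> (1 + eps) * m / pv"
      using Fb pv0 by (intro divide_right_mono) (auto simp: m_def)
    finally show ?thesis .
  qed
  have eth: "0 \<le> exp \<theta> - 1" using th0 by simp
  have suma: "(\<Sum>z\<in>Zs vw u. a z) \<le> (exp \<theta> - 1) / b * ((1 + eps) * m / pv)"
  proof -
    have "(\<Sum>z\<in>Zs vw u. a z) \<le> (\<Sum>z\<in>Zs vw u. (exp \<theta> - 1) / b * (pv * pe * yv \<sigma> {vw, z}))"
      by (rule sum_mono) (rule a_le)
    also have "\<dots> = (exp \<theta> - 1) / b * (\<Sum>z\<in>Zs vw u. pv * pe * yv \<sigma> {vw, z})"
      by (simp add: sum_distrib_left)
    also have "\<dots> \<le> (exp \<theta> - 1) / b * ((1 + eps) * m / pv)"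
      using sumy eth b0 by (intro mult_left_mono) auto
    finally show ?thesis .
  qed
  define K where "K = m / (b * pv)"
  have K0: "0 \<le> K" unfolding K_def using m0 b0 pv0 by simp
  have expo: "lam * b - lam * T / pv + (exp \<theta> - 1) / b * ((1 + eps) * m / pv) =
              \<theta> + K * ((exp \<theta> - 1) * (1 + eps) - \<theta> * (1 + 3 * eps))"
    unfolding K_def lam_def T_def using b0 pv0 by (simp add: field_simps)
  have eb: "exp \<theta> - 1 \<le> \<theta> + \<theta>\<^sup>2" using exp_bound[of \<theta>] th0 by simp
  have e2: "eps = 2 * \<theta>" by (simp add: \<theta>_def)
  have poly: "(\<theta> + \<theta>\<^sup>2) * (1 + eps) - \<theta> * (1 + 3 * eps) = 2 * (\<theta>\<^sup>2 * \<theta>) - 3 * \<theta>\<^sup>2"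
    unfolding e2 by (simp add: algebra_simps power2_eq_square)
  have th2: "\<theta> \<le> 1/2" using eps_le by (simp add: \<theta>_def)
  have "\<theta>\<^sup>2 * \<theta> \<le> \<theta>\<^sup>2 * (1/2)" using th2 by (intro mult_left_mono) auto
  hence poly2: "2 * (\<theta>\<^sup>2 * \<theta>) - 3 * \<theta>\<^sup>2 \<le> - (eps\<^sup>2 / 2)"
    unfolding e2 by (simp add: power2_eq_square)
  have "(exp \<theta> - 1) * (1 + eps) - \<theta> * (1 + 3 * eps) \<le> (\<theta> + \<theta>\<^sup>2) * (1 + eps) - \<theta> * (1 + 3 * eps)"
    using eb eps0 by (simp add: mult_right_mono)
  hence coef: "(exp \<theta> - 1) * (1 + eps) - \<theta> * (1 + 3 * eps) \<le> - (eps\<^sup>2 / 2)" using poly poly2 by linarith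
  have Kge: "10 * L1 / eps\<^sup>2 \<le> K"
  proof -
    have "eps / b = 10 * L1 / eps\<^sup>2" unfolding b_eq using eps0 L1_ge by (simp add: field_simps power2_eq_square power3_eq_cube)
    moreover have "eps / b \<le> m / b" using me b0 by (intro divide_right_mono) auto
    moreover have "m / b \<le> m / (b * pv)"
    proof -
      have "m / b * 1 \<le> m / b * (1 / pv)" using m0 b0 pv0 pv1 by (intro mult_left_mono) auto
      thus ?thesis by simp
    qed
    ultimately show ?thesis unfolding K_def by linarith
  qed
  have "K * ((exp \<theta> - 1) * (1 + eps) - \<theta> * (1 + 3 * eps)) \<le> K * (- (eps\<^sup>2 / 2))"
    using coef K0 by (intro mult_left_mono) auto
  also have "\<dots> \<le> 10 * L1 / eps\<^sup>2 * (- (eps\<^sup>2 / 2))"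
    using Kge eps0 by (intro mult_right_mono_neg) auto
  also have "\<dots> = - 5 * L1" using eps0 by (simp add: field_simps)
  finally have E_le: "lam * b - lam * T / pv + (exp \<theta> - 1) / b * ((1 + eps) * m / pv) \<le> 1/2 - 5 * L1"
    unfolding expo using th0 eps_le by (simp add: \<theta>_def)
  have "exp (1/2 - 5 * L1) = exp (1/2) * eps ^ 5"
  proof -
    have "exp (5 * L1) = (1 / eps) ^ 5" using eps0 by (simp add: exp_of_nat_mult[of 5, simplified] )
    hence "exp (1/2) / exp (5 * L1) = exp (1/2) * eps ^ 5" by (simp add: power_one_over)
    thus ?thesis by (simp add: exp_diff)
  qed
  also have "\<dots> \<le> 7/4 * eps ^ 5" using exp_half_le eps0 by (intro mult_right_mono) auto
  also have "\<dots> \<le> eps"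
  proof -
    have "eps ^ 4 \<le> (1/2) ^ 4" using eps0 eps_le by (intro power_mono) auto
    hence "eps * eps ^ 4 \<le> eps * (1/2) ^ 4" using eps0 by (intro mult_left_mono) auto
    moreover have "(1/2::real) ^ 4 = 1/16" by (simp add: power_divide)
    ultimately have "eps * eps ^ 4 \<le> eps / 16" by simp
    moreover have "eps ^ 5 = eps * eps ^ 4" by (simp add: power_Suc[symmetric] del: power_Suc)
    ultimately have "eps ^ 5 \<le> eps / 16" by simp
    thus ?thesis using eps0 by simp
  qed
  finally have fin: "exp (1/2 - 5 * L1) \<le> eps" .
  have "exp (lam * b - lam * T / pv) * (c * (\<Prod>z\<in>Zs vw u. 1 + a z)) \<le>
        exp (lam * b - lam * T / pv) * (c * exp (\<Sum>z\<in>Zs vw u. a z))"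
    using prodle c_pos by (intro mult_left_mono) auto
  also have "\<dots> = c * exp (lam * b - lam * T / pv + (\<Sum>z\<in>Zs vw u. a z))" by (simp add: exp_add)
  also have "\<dots> \<le> c * exp (lam * b - lam * T / pv + (exp \<theta> - 1) / b * ((1 + eps) * m / pv))"
    using suma c_pos by (intro mult_left_mono) auto
  also have "\<dots> \<le> c * exp (1/2 - 5 * L1)" using E_le c_pos by (intro mult_left_mono) auto
  also have "\<dots> \<le> c * eps" using fin c_pos by (intro mult_left_mono) auto
  finally show ?thesis using raw unfolding T_def m_def by linarith
qed

end


context NC begin

abbreviation "xv \<equiv> xtilde_v Alg eps pv pe V E"
abbreviation "xf \<equiv> xfrac Alg eps pv pe V E"

lemma scale_ge:
  assumes eE: "e \<in> E" and s1: "s0 \<le> 1"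
    and hv: "\<And>v. v \<in> e \<Longrightarrow> 0 < xv \<sigma> H v \<Longrightarrow> s0 \<le> M v / (pv * xv \<sigma> H v)"
  shows "s0 \<le> scale Alg eps pv pe V E \<sigma> H e"
proof -
  have fe: "finite e" using edgeE[OF eE] by auto
  let ?S = "{M v / (pv * xv \<sigma> H v) | v. v \<in> e \<and> xv \<sigma> H v > 0}"
  have fS: "finite ?S" using fe by simp
  show ?thesis unfolding scale_def
    by (subst Min_ge_iff) (use fS s1 hv in auto)
qed

lemma scale_01:
  assumes eE: "e \<in> E"
  shows "0 \<le> scale Alg eps pv pe V E \<sigma> H e" "scale Alg eps pv pe V E \<sigma> H e \<le> 1"
proof -
  have fe: "finite e" using edgeE[OF eE] by auto
  let ?S = "{M v / (pv * xv \<sigma> H v) | v. v \<in> e \<and> xv \<sigma> H v > 0}"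
  have fS: "finite ?S" using fe by simp
  show "scale Alg eps pv pe V E \<sigma> H e \<le> 1" unfolding scale_def
    by (rule Min_le) (use fS in auto)
  show "0 \<le> scale Alg eps pv pe V E \<sigma> H e"
    by (rule scale_ge[OF eE]) (use eps0 pv0 in \<open>auto intro!: divide_nonneg_pos\<close>)
qed

lemma xt_nonneg: "0 \<le> xtilde Alg eps pv pe V E \<sigma> H e"
  using yv_nonneg by (simp add: xt_eq)

lemma xf_bounds:
  "0 \<le> xf \<sigma> H e" "xf \<sigma> H e \<le> 2 * \<tau> / c"
proof -
  have "(0 \<le> xf \<sigma> H e \<and> xf \<sigma> H e \<le> 2 * \<tau> / c)"
  proof (cases "e \<in> E")
    case True
    have x0: "0 \<le> xtilde Alg eps pv pe V E \<sigma> H e" by (rule xt_nonneg)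
    have x1: "xtilde Alg eps pv pe V E \<sigma> H e \<le> 2 * \<tau> / c"
      using yv_le[of \<sigma> e] tau_pos c_pos by (simp add: xt_eq)
    have "scale Alg eps pv pe V E \<sigma> H e * xtilde Alg eps pv pe V E \<sigma> H e \<le> 1 * (2 * \<tau> / c)"
      using scale_01[OF True] x0 x1 by (intro mult_mono) auto
    thus ?thesis using scale_01[OF True] x0 by (simp add: xfrac_def)
  next
    case False
    hence "xtilde Alg eps pv pe V E \<sigma> H e = 0" using N_sub by (auto simp: xtilde_def)
    thus ?thesis using tau_pos c_pos by (simp add: xfrac_def)
  qed
  thus "0 \<le> xf \<sigma> H e" "xf \<sigma> H e \<le> 2 * \<tau> / c" by auto
qed

definition good :: "'a set \<Rightarrow> 'a \<Rightarrow> 'a \<Rightarrow> (nat \<Rightarrow> 'a realz) \<Rightarrow> 'a realz \<Rightarrow> bool" where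
  "good e vw u \<sigma> H \<longleftrightarrow> fr \<sigma> e \<le> 2 * \<tau> \<and> pv * xv \<sigma> H vw \<le> (1 + 3 * eps) * M vw
      \<and> pv * xv \<sigma> H u \<le> (1 + 3 * eps) * M u"

lemma fr_pos_EQ: "0 < fr \<sigma> e \<Longrightarrow> e \<in> EQ Alg eps pv pe \<sigma>"
proof -
  assume h: "0 < fr \<sigma> e"
  have "{r \<in> {..<R}. e \<in> Alg (\<sigma> r)} \<noteq> {}"
  proof
    assume "{r \<in> {..<R}. e \<in> Alg (\<sigma> r)} = {}"
    hence "fr \<sigma> e = 0" unfolding freq_def by (simp only: card.empty)
    with h show False by simp
  qed
  then obtain r where "r < R" "e \<in> Alg (\<sigma> r)" by blast
  thus ?thesis by (auto simp: EQ_def)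
qed

lemma K1:
  assumes eN: "e \<in> N" and eq: "e = {vw, u}" and eps10: "eps \<le> 1/10"
  shows "(1 - 3 * eps) * (if e \<in> snd H \<and> good e vw u \<sigma> H then fr \<sigma> e / c else 0) \<le> xf \<sigma> H e"
proof (cases "e \<in> snd H \<and> good e vw u \<sigma> H \<and> 0 < fr \<sigma> e")
  case True
  have eE: "e \<in> E" using eN N_sub by auto
  have inEQ: "e \<in> EQ Alg eps pv pe \<sigma>" using True fr_pos_EQ by blast
  have frle: "fr \<sigma> e \<le> 2 * \<tau>" using True by (simp add: good_def)
  have xt: "xtilde Alg eps pv pe V E \<sigma> H e = fr \<sigma> e / c"
    using True inEQ eN frle c_pos by (auto simp: xtilde_def min_def divide_right_mono)
  have sc: "1 / (1 + 3 * eps) \<le> scale Alg eps pv pe V E \<sigma> H e"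
  proof (rule scale_ge[OF eE])
    show "1 / (1 + 3 * eps) \<le> 1" using eps0 by simp
    fix v assume v: "v \<in> e" "0 < xv \<sigma> H v"
    have "pv * xv \<sigma> H v \<le> (1 + 3 * eps) * M v" using v(1) True eq by (auto simp: good_def)
    moreover have "0 < M v" using eps0 by (simp add: less_max_iff_disj)
    moreover have "0 < pv * xv \<sigma> H v" using v(2) pv0 by simp
    ultimately show "1 / (1 + 3 * eps) \<le> M v / (pv * xv \<sigma> H v)"
      using eps0 by (simp add: field_simps)
  qed
  have "(1 - 3 * eps) \<le> 1 / (1 + 3 * eps)"
  proof -
    have "(1 - 3 * eps) * (1 + 3 * eps) \<le> 1" by (simp add: algebra_simps)
    thus ?thesis using eps0 by (simp add: field_simps)
  qed
  hence "1 - 3 * eps \<le> scale Alg eps pv pe V E \<sigma> H e" using sc by linarith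
  hence "(1 - 3 * eps) * (fr \<sigma> e / c) \<le> scale Alg eps pv pe V E \<sigma> H e * (fr \<sigma> e / c)"
    using fr_nonneg[of \<sigma> e] c_pos by (intro mult_right_mono) auto
  thus ?thesis using True by (simp add: xfrac_def xt)
next
  case False
  hence "(if e \<in> snd H \<and> good e vw u \<sigma> H then fr \<sigma> e / c else 0) = 0"
    using fr_nonneg[of \<sigma> e] by auto
  thus ?thesis using xf_bounds(1) by simp
qed

end


lemma int_add_bdd:
  fixes f g :: "'a \<Rightarrow> real"
  assumes "\<And>x. \<bar>f x\<bar> \<le> B" "\<And>x. \<bar>g x\<bar> \<le> B'"
  shows "measure_pmf.expectation p (\<lambda>x. f x + g x) = measure_pmf.expectation p f + measure_pmf.expectation p g"
  by (rule Bochner_Integration.integral_add) (auto intro: pmf_integrable_bdd assms)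

context NC begin

abbreviation "P2 \<equiv> pair_pmf S \<rho>"

definition ind :: "'a set \<Rightarrow> 'a realz \<Rightarrow> real" where
  "ind e H = (if e \<in> snd H then 1 else 0)"

definition aI :: "'a set \<Rightarrow> (nat \<Rightarrow> 'a realz) \<Rightarrow> real" where
  "aI e \<sigma> = (if 2 * \<tau> < fr \<sigma> e then 1 else 0)"

definition b1I :: "'a \<Rightarrow> (nat \<Rightarrow> 'a realz) \<Rightarrow> real" where
  "b1I v \<sigma> = (if (1 + eps) * M v < Fw \<sigma> v then 1 else 0)"

definition bbI :: "'a set \<Rightarrow> 'a \<Rightarrow> (nat \<Rightarrow> 'a realz) \<Rightarrow> 'a realz \<Rightarrow> real" where
  "bbI e v \<sigma> H = (if \<not> ((1 + eps) * M v < Fw \<sigma> v) \<and> e \<in> snd H \<and> (1 + 3 * eps) * M v < pv * xv \<sigma> H v then 1 else 0)"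

definition Tsum :: "'a set \<Rightarrow> 'a \<Rightarrow> 'a \<Rightarrow> nat \<Rightarrow> (nat \<Rightarrow> 'a realz) \<Rightarrow> 'a realz \<Rightarrow> real" where
  "Tsum e vw u r \<sigma> H = X e (\<sigma> r) * aI e \<sigma> * ind e H + (X e (\<sigma> r) * b1I vw \<sigma> * ind e H +
     (X e (\<sigma> r) * b1I u \<sigma> * ind e H + (X e (\<sigma> r) * bbI e vw \<sigma> H + X e (\<sigma> r) * bbI e u \<sigma> H)))"

lemma ind01: "0 \<le> ind e H" "ind e H \<le> 1" by (auto simp: ind_def)
lemma aI01: "0 \<le> aI e \<sigma>" "aI e \<sigma> \<le> 1" by (auto simp: aI_def)
lemma b1I01: "0 \<le> b1I v \<sigma>" "b1I v \<sigma> \<le> 1" by (auto simp: b1I_def)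
lemma bbI01: "0 \<le> bbI e v \<sigma> H" "bbI e v \<sigma> H \<le> 1" by (auto simp: bbI_def)

lemma prod01:
  fixes a b :: real
  assumes "0 \<le> a" "a \<le> 1" "0 \<le> b" "b \<le> 1"
  shows "0 \<le> a * b" "a * b \<le> 1"
  using assms mult_mono[of a 1 b 1] by auto

lemma Tsum_bounds: "0 \<le> Tsum e vw u r \<sigma> H" "Tsum e vw u r \<sigma> H \<le> 5"
proof -
  note X_01[of e "\<sigma> r"] ind01[of e H] aI01[of e \<sigma>] b1I01[of vw \<sigma>] b1I01[of u \<sigma>] bbI01[of e vw \<sigma> H] bbI01[of e u \<sigma> H]
  note p = prod01[OF prod01(1,2)] prod01
  have t1: "0 \<le> X e (\<sigma> r) * aI e \<sigma> * ind e H" "X e (\<sigma> r) * aI e \<sigma> * ind e H \<le> 1"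
    using X_01 ind01 aI01 by (intro p; simp)+
  have t2: "0 \<le> X e (\<sigma> r) * b1I vw \<sigma> * ind e H" "X e (\<sigma> r) * b1I vw \<sigma> * ind e H \<le> 1"
    using X_01 ind01 b1I01 by (intro p; simp)+
  have t3: "0 \<le> X e (\<sigma> r) * b1I u \<sigma> * ind e H" "X e (\<sigma> r) * b1I u \<sigma> * ind e H \<le> 1"
    using X_01 ind01 b1I01 by (intro p; simp)+
  have t4: "0 \<le> X e (\<sigma> r) * bbI e vw \<sigma> H" "X e (\<sigma> r) * bbI e vw \<sigma> H \<le> 1"
    using X_01 bbI01 by (intro p; simp)+
  have t5: "0 \<le> X e (\<sigma> r) * bbI e u \<sigma> H" "X e (\<sigma> r) * bbI e u \<sigma> H \<le> 1"
    using X_01 bbI01 by (intro p; simp)+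
  show "0 \<le> Tsum e vw u r \<sigma> H" "Tsum e vw u r \<sigma> H \<le> 5"
    unfolding Tsum_def using t1 t2 t3 t4 t5 by linarith+
qed

lemma fr_le1: "fr \<sigma> e \<le> 1"
proof -
  have "card {r \<in> {..<R}. e \<in> Alg (\<sigma> r)} \<le> card {..<R}" by (intro card_mono) auto
  thus ?thesis using R_pos by (simp add: freq_def)
qed

lemma PW:
  assumes eq: "e = {vw, u}"
  shows "ind e H * fr \<sigma> e / c - (\<Sum>r<R. Tsum e vw u r \<sigma> H) / (c * real R)
         \<le> (if e \<in> snd H \<and> good e vw u \<sigma> H then fr \<sigma> e / c else 0)"
proof -
  have S0: "0 \<le> (\<Sum>r<R. Tsum e vw u r \<sigma> H) / (c * real R)"
    using Tsum_bounds c_pos R_pos by (intro divide_nonneg_pos sum_nonneg) auto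
  show ?thesis
  proof (cases "e \<in> snd H")
    case False thus ?thesis using S0 by (simp add: ind_def)
  next
    case inH: True
    show ?thesis
    proof (cases "good e vw u \<sigma> H")
      case True thus ?thesis using S0 inH by (simp add: ind_def)
    next
      case False
      have one: "1 \<le> aI e \<sigma> + b1I vw \<sigma> + b1I u \<sigma> + bbI e vw \<sigma> H + bbI e u \<sigma> H"
        using False inH aI01[of e \<sigma>] b1I01[of vw \<sigma>] b1I01[of u \<sigma>] bbI01[of e vw \<sigma> H] bbI01[of e u \<sigma> H]
        unfolding good_def aI_def b1I_def bbI_def by (auto split: if_splits)
      have Tr: "X e (\<sigma> r) \<le> Tsum e vw u r \<sigma> H" for r
      proof -
        have "Tsum e vw u r \<sigma> H = X e (\<sigma> r) * (aI e \<sigma> + b1I vw \<sigma> + b1I u \<sigma> + bbI e vw \<sigma> H + bbI e u \<sigma> H)"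
          using inH by (simp add: Tsum_def ind_def algebra_simps)
        also have "\<dots> \<ge> X e (\<sigma> r) * 1" using one X_01[of e "\<sigma> r"] by (intro mult_left_mono) auto
        finally show ?thesis by simp
      qed
      have "real R * fr \<sigma> e = (\<Sum>r<R. X e (\<sigma> r))" using R_pos by (simp add: fr_sum)
      also have "\<dots> \<le> (\<Sum>r<R. Tsum e vw u r \<sigma> H)" by (intro sum_mono Tr)
      finally have "real R * fr \<sigma> e \<le> (\<Sum>r<R. Tsum e vw u r \<sigma> H)" .
      hence "real R * fr \<sigma> e / (c * real R) \<le> (\<Sum>r<R. Tsum e vw u r \<sigma> H) / (c * real R)"
        using c_pos R_pos by (intro divide_right_mono) auto
      moreover have "real R * fr \<sigma> e / (c * real R) = fr \<sigma> e / c" using R_pos c_pos by simp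
      ultimately show ?thesis using inH False by (simp add: ind_def)
    qed
  qed
qed

end


context NC begin

lemma P1:
  assumes eE: "e \<in> E" and g0: "\<And>x. 0 \<le> g x" and gB: "\<And>x. g x \<le> B"
  shows "measure_pmf.expectation P2 (\<lambda>x. g (fst x) * ind e (snd x)) = measure_pmf.expectation S g * c"
proof -
  have "measure_pmf.expectation P2 (\<lambda>x. g (fst x) * ind e (snd x)) =
        measure_pmf.expectation S g * measure_pmf.expectation \<rho> (ind e)"
    by (rule exp_pair_prod[OF g0 gB ind01(1) ind01(2)])
  also have "ind e = (\<lambda>H. if e \<in> snd H then 1 else 0)" by (auto simp: ind_def fun_eq_iff)
  hence "measure_pmf.expectation \<rho> (ind e) = c" using prob_edge[OF eE] by simp
  finally show ?thesis .
qed

lemma Ea: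
  assumes eN: "e \<in> N" and r: "r < R"
  shows "measure_pmf.expectation P2 (\<lambda>x. X e (fst x r) * aI e (fst x) * ind e (snd x)) \<le> c * eps * q e"
proof -
  have eE: "e \<in> E" using eN N_sub by auto
  have "measure_pmf.expectation P2 (\<lambda>x. X e (fst x r) * aI e (fst x) * ind e (snd x)) =
        measure_pmf.expectation S (\<lambda>\<sigma>. X e (\<sigma> r) * aI e \<sigma>) * c"
    by (rule P1[OF eE, where B=1]) (use X_01 aI01 prod01 in auto)
  also have "measure_pmf.expectation S (\<lambda>\<sigma>. X e (\<sigma> r) * aI e \<sigma>) \<le> eps * q e"
    using T_a[OF eN r] by (simp add: aI_def)
  hence "measure_pmf.expectation S (\<lambda>\<sigma>. X e (\<sigma> r) * aI e \<sigma>) * c \<le> eps * q e * c"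
    using c_pos by (intro mult_right_mono) auto
  finally show ?thesis by (simp add: mult_ac)
qed

lemma Eb1:
  assumes eE: "e \<in> E" and r: "r < R"
  shows "measure_pmf.expectation P2 (\<lambda>x. X e (fst x r) * b1I v (fst x) * ind e (snd x)) \<le> c * eps * q e"
proof -
  have "measure_pmf.expectation P2 (\<lambda>x. X e (fst x r) * b1I v (fst x) * ind e (snd x)) =
        measure_pmf.expectation S (\<lambda>\<sigma>. X e (\<sigma> r) * b1I v \<sigma>) * c"
    by (rule P1[OF eE, where B=1]) (use X_01 b1I01 prod01 in auto)
  also have "measure_pmf.expectation S (\<lambda>\<sigma>. X e (\<sigma> r) * b1I v \<sigma>) \<le> eps * q e"
    using T_b1[OF r, of e v] by (simp add: b1I_def)
  hence "measure_pmf.expectation S (\<lambda>\<sigma>. X e (\<sigma> r) * b1I v \<sigma>) * c \<le> eps * q e * c"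
    using c_pos by (intro mult_right_mono) auto
  finally show ?thesis by (simp add: mult_ac)
qed

lemma Ebb:
  assumes eN: "e \<in> N" and eq: "e = {v, u}" and vu: "v \<noteq> u" and r: "r < R"
  shows "measure_pmf.expectation P2 (\<lambda>x. X e (fst x r) * bbI e v (fst x) (snd x)) \<le> c * eps * q e"
proof -
  have inner: "measure_pmf.expectation \<rho> (bbI e v \<sigma>) \<le> c * eps" for \<sigma>
  proof (cases "(1 + eps) * M v < Fw \<sigma> v")
    case True
    hence "bbI e v \<sigma> = (\<lambda>_. 0)" by (auto simp: bbI_def fun_eq_iff)
    thus ?thesis using c_pos eps0 by simp
  next
    case False
    hence "bbI e v \<sigma> = (\<lambda>H. if e \<in> snd H \<and> (1 + 3 * eps) * M v < pv * xv \<sigma> H v then 1 else 0)"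
      by (auto simp: bbI_def fun_eq_iff)
    moreover have "Fw \<sigma> v \<le> (1 + eps) * M v" using False by simp
    ultimately show ?thesis using B2[OF eN eq vu] by simp
  qed
  have "measure_pmf.expectation P2 (\<lambda>x. X e (fst x r) * bbI e v (fst x) (snd x)) =
        measure_pmf.expectation S (\<lambda>\<sigma>. measure_pmf.expectation \<rho> (\<lambda>H. X e (fst (\<sigma>, H) r) * bbI e v (fst (\<sigma>, H)) (snd (\<sigma>, H))))"
    by (rule exp_pair_iter[where B=1]) (use X_01 bbI01 prod01 in auto)
  also have "\<dots> = measure_pmf.expectation S (\<lambda>\<sigma>. X e (\<sigma> r) * measure_pmf.expectation \<rho> (bbI e v \<sigma>))"
    by simp
  also have "\<dots> \<le> measure_pmf.expectation S (\<lambda>\<sigma>. X e (\<sigma> r) * (c * eps))"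
  proof (rule pmf_exp_mono[where B="c * eps" and B'="c * eps"])
    fix \<sigma>
    have i0: "0 \<le> measure_pmf.expectation \<rho> (bbI e v \<sigma>)"
      by (intro Bochner_Integration.integral_nonneg bbI01)
    show "X e (\<sigma> r) * measure_pmf.expectation \<rho> (bbI e v \<sigma>) \<le> X e (\<sigma> r) * (c * eps)"
      using inner[of \<sigma>] X_01 by (intro mult_left_mono) auto
    show "\<bar>X e (\<sigma> r) * measure_pmf.expectation \<rho> (bbI e v \<sigma>)\<bar> \<le> c * eps"
      using inner[of \<sigma>] i0 X_01[of e "\<sigma> r"] mult_mono[of "X e (\<sigma> r)" 1 "measure_pmf.expectation \<rho> (bbI e v \<sigma>)" "c * eps"]
      by (simp add: abs_mult)
    show "\<bar>X e (\<sigma> r) * (c * eps)\<bar> \<le> c * eps"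
    proof -
      have "0 \<le> X e (\<sigma> r) * (c * eps)" using X_01[of e "\<sigma> r"] c_pos eps0 by simp
      moreover have "X e (\<sigma> r) * (c * eps) \<le> c * eps"
        using X_01[of e "\<sigma> r"] c_pos eps0 mult_right_mono[of "X e (\<sigma> r)" 1 "c * eps"] by simp
      ultimately show ?thesis by (simp only: abs_of_nonneg)
    qed
  qed
  also have "\<dots> = measure_pmf.expectation S (\<lambda>\<sigma>. X e (\<sigma> r)) * (c * eps)" by simp
  also have "measure_pmf.expectation S (\<lambda>\<sigma>. X e (\<sigma> r)) = q e"
    using exp_S_comp[OF r, of "X e"] exp_X by simp
  finally show ?thesis by (simp add: mult_ac)
qed

end


lemma abs_le_of: "0 \<le> (a::real) \<Longrightarrow> a \<le> B \<Longrightarrow> \<bar>a\<bar> \<le> B" by simp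

context NC begin

lemma ET:
  assumes eN: "e \<in> N" and eq: "e = {vw, u}" and vu: "vw \<noteq> u" and r: "r < R"
  shows "measure_pmf.expectation P2 (\<lambda>x. Tsum e vw u r (fst x) (snd x)) \<le> 5 * (c * eps * q e)"
proof -
  have eE: "e \<in> E" using eN N_sub by auto
  define f1 where "f1 = (\<lambda>x. X e (fst x r) * aI e (fst x) * ind e (snd x))"
  define f2 where "f2 = (\<lambda>x. X e (fst x r) * b1I vw (fst x) * ind e (snd x))"
  define f3 where "f3 = (\<lambda>x. X e (fst x r) * b1I u (fst x) * ind e (snd x))"
  define f4 where "f4 = (\<lambda>x. X e (fst x r) * bbI e vw (fst x) (snd x))"
  define f5 where "f5 = (\<lambda>x. X e (fst x r) * bbI e u (fst x) (snd x))"
  note p = prod01[OF prod01(1,2)] prod01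
  have b1: "\<bar>f1 x\<bar> \<le> 1" "\<bar>f2 x\<bar> \<le> 1" "\<bar>f3 x\<bar> \<le> 1" "\<bar>f4 x\<bar> \<le> 1" "\<bar>f5 x\<bar> \<le> 1"
    and n: "0 \<le> f1 x" "0 \<le> f2 x" "0 \<le> f3 x" "0 \<le> f4 x" "0 \<le> f5 x" for x
    unfolding f1_def f2_def f3_def f4_def f5_def
    using X_01 ind01 aI01 b1I01 bbI01 by (intro abs_le_of p; simp)+
  have "(\<lambda>x. Tsum e vw u r (fst x) (snd x)) = (\<lambda>x. f1 x + (f2 x + (f3 x + (f4 x + f5 x))))"
    by (simp add: Tsum_def f1_def f2_def f3_def f4_def f5_def fun_eq_iff)
  note h = this
  have "measure_pmf.expectation P2 (\<lambda>x. Tsum e vw u r (fst x) (snd x)) =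
     measure_pmf.expectation P2 f1 + (measure_pmf.expectation P2 f2 + (measure_pmf.expectation P2 f3 +
     (measure_pmf.expectation P2 f4 + measure_pmf.expectation P2 f5)))"
  proof -
    have s45: "measure_pmf.expectation P2 (\<lambda>x. f4 x + f5 x) = measure_pmf.expectation P2 f4 + measure_pmf.expectation P2 f5"
      by (rule int_add_bdd) (rule b1)+
    have c45: "\<bar>f4 x + f5 x\<bar> \<le> 2" for x using b1(4,5)[of x] n(4,5)[of x] by (simp only: abs_le_iff) linarith
    have c345: "\<bar>f3 x + (f4 x + f5 x)\<bar> \<le> 3" for x using b1(3,4,5)[of x] n(3,4,5)[of x] by (simp only: abs_le_iff) linarith
    have c2345: "\<bar>f2 x + (f3 x + (f4 x + f5 x))\<bar> \<le> 4" for x using b1(2,3,4,5)[of x] n(2,3,4,5)[of x] by (simp only: abs_le_iff) linarith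
    have s3: "measure_pmf.expectation P2 (\<lambda>x. f3 x + (f4 x + f5 x)) = measure_pmf.expectation P2 f3 + measure_pmf.expectation P2 (\<lambda>x. f4 x + f5 x)"
      by (rule int_add_bdd[where B=1 and B'=2]) (rule b1, rule c45)
    have s2: "measure_pmf.expectation P2 (\<lambda>x. f2 x + (f3 x + (f4 x + f5 x))) = measure_pmf.expectation P2 f2 + measure_pmf.expectation P2 (\<lambda>x. f3 x + (f4 x + f5 x))"
      by (rule int_add_bdd[where B=1 and B'=3]) (rule b1, rule c345)
    have s1: "measure_pmf.expectation P2 (\<lambda>x. f1 x + (f2 x + (f3 x + (f4 x + f5 x)))) = measure_pmf.expectation P2 f1 + measure_pmf.expectation P2 (\<lambda>x. f2 x + (f3 x + (f4 x + f5 x)))"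
      by (rule int_add_bdd[where B=1 and B'=4]) (rule b1, rule c2345)
    show ?thesis unfolding h s1 s2 s3 s45 ..
  qed
  moreover have "measure_pmf.expectation P2 f1 \<le> c * eps * q e" unfolding f1_def by (rule Ea[OF eN r])
  moreover have "measure_pmf.expectation P2 f2 \<le> c * eps * q e" unfolding f2_def by (rule Eb1[OF eE r])
  moreover have "measure_pmf.expectation P2 f3 \<le> c * eps * q e" unfolding f3_def by (rule Eb1[OF eE r])
  moreover have "measure_pmf.expectation P2 f4 \<le> c * eps * q e" unfolding f4_def by (rule Ebb[OF eN eq vu r])
  moreover have "measure_pmf.expectation P2 f5 \<le> c * eps * q e" unfolding f5_def
    by (rule Ebb[OF eN _ vu[symmetric] r]) (simp add: eq insert_commute)
  ultimately show ?thesis by linarith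
qed

lemma EG:
  assumes eN: "e \<in> N" and eq: "e = {vw, u}" and vu: "vw \<noteq> u"
  shows "q e - 5 * eps * q e \<le> measure_pmf.expectation P2
           (\<lambda>x. if e \<in> snd (snd x) \<and> good e vw u (fst x) (snd x) then fr (fst x) e / c else 0)"
proof -
  have eE: "e \<in> E" using eN N_sub by auto
  define L where "L = (\<lambda>x. ind e (snd x) * fr (fst x) e / c - (\<Sum>r<R. Tsum e vw u r (fst x) (snd x)) / (c * real R))"
  define T where "T = (\<lambda>x. \<Sum>r<R. Tsum e vw u r (fst x) (snd x))"
  have T0: "0 \<le> T x" "T x \<le> 5 * real R" for x
  proof -
    show "0 \<le> T x" unfolding T_def by (intro sum_nonneg Tsum_bounds)
    have "T x \<le> (\<Sum>r<R. 5)" unfolding T_def by (intro sum_mono Tsum_bounds)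
    thus "T x \<le> 5 * real R" by simp
  qed
  have fr01: "0 \<le> fr \<sigma> e" "fr \<sigma> e \<le> 1" for \<sigma> using fr_nonneg fr_le1 by auto
  have IF: "0 \<le> ind e H * fr \<sigma> e" "ind e H * fr \<sigma> e \<le> 1" for H \<sigma>
    using prod01[OF ind01(1,2) fr01] by auto
  have a1: "0 \<le> ind e (snd x) * fr (fst x) e / c" "ind e (snd x) * fr (fst x) e / c \<le> 1 / c" for x
    proof -
      show "0 \<le> ind e (snd x) * fr (fst x) e / c" using IF(1)[of "snd x" "fst x"] c_pos by simp
      show "ind e (snd x) * fr (fst x) e / c \<le> 1 / c"
        by (rule divide_right_mono[OF IF(2)]) (use c_pos in simp)
    qed
  have a2: "0 \<le> T x / (c * real R)" "T x / (c * real R) \<le> 5 / c" for x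
    proof -
      show "0 \<le> T x / (c * real R)" using T0 c_pos R_pos by simp
      have "T x / (c * real R) \<le> 5 * real R / (c * real R)" using T0 c_pos R_pos by (intro divide_right_mono) auto
      thus "T x / (c * real R) \<le> 5 / c" using R_pos by simp
    qed
  have A1: "\<bar>ind e (snd x) * fr (fst x) e / c\<bar> \<le> 1 / c" for x using abs_le_of[OF a1(1) a1(2)] .
  have A2: "\<bar>T x / (c * real R)\<bar> \<le> 5 / c" for x using abs_le_of[OF a2(1) a2(2)] .
  have "measure_pmf.expectation P2 L \<le> measure_pmf.expectation P2
           (\<lambda>x. if e \<in> snd (snd x) \<and> good e vw u (fst x) (snd x) then fr (fst x) e / c else 0)"
  proof (rule pmf_exp_mono[where B="1 / c + 5 / c" and B'="1 / c"])
    fix x :: "(nat \<Rightarrow> 'a realz) \<times> 'a realz"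
    show "L x \<le> (if e \<in> snd (snd x) \<and> good e vw u (fst x) (snd x) then fr (fst x) e / c else 0)"
      unfolding L_def by (rule PW[OF eq])
    have eqL: "L x = ind e (snd x) * fr (fst x) e / c - T x / (c * real R)" by (simp add: L_def T_def)
    show "\<bar>L x\<bar> \<le> 1 / c + 5 / c" unfolding eqL abs_le_iff using a1[of x] a2[of x] by linarith
    show "\<bar>if e \<in> snd (snd x) \<and> good e vw u (fst x) (snd x) then fr (fst x) e / c else 0\<bar> \<le> 1 / c"
      using fr01 c_pos by (auto intro: divide_right_mono)
  qed
  moreover have "measure_pmf.expectation P2 L = q e - measure_pmf.expectation P2 T / (c * real R)"
  proof -
    have Leq: "L = (\<lambda>x. ind e (snd x) * fr (fst x) e / c - T x / (c * real R))" by (simp add: L_def T_def fun_eq_iff)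
    have "measure_pmf.expectation P2 L = measure_pmf.expectation P2 (\<lambda>x. ind e (snd x) * fr (fst x) e / c)
            - measure_pmf.expectation P2 (\<lambda>x. T x / (c * real R))"
      unfolding Leq
      by (rule Bochner_Integration.integral_diff) (rule pmf_integrable_bdd, rule A1, rule pmf_integrable_bdd, rule A2)
    also have "measure_pmf.expectation P2 (\<lambda>x. ind e (snd x) * fr (fst x) e / c) = q e"
    proof -
      have "measure_pmf.expectation P2 (\<lambda>x. ind e (snd x) * fr (fst x) e / c) =
            measure_pmf.expectation P2 (\<lambda>x. fr (fst x) e * ind e (snd x)) / c"
        by (simp add: mult.commute)
      also have "measure_pmf.expectation P2 (\<lambda>x. fr (fst x) e * ind e (snd x)) = measure_pmf.expectation S (\<lambda>\<sigma>. fr \<sigma> e) * c"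
        by (rule P1[OF eE, where B=1]) (use fr01 in auto)
      finally show ?thesis using c_pos pv0 pe0 by (simp add: exp_fr)
    qed
    also have "measure_pmf.expectation P2 (\<lambda>x. T x / (c * real R)) = measure_pmf.expectation P2 T / (c * real R)"
      by simp
    finally show ?thesis .
  qed
  moreover have "measure_pmf.expectation P2 T \<le> real R * (5 * (c * eps * q e))"
  proof -
    have "measure_pmf.expectation P2 T = (\<Sum>r<R. measure_pmf.expectation P2 (\<lambda>x. Tsum e vw u r (fst x) (snd x)))"
      unfolding T_def
      by (rule Bochner_Integration.integral_sum) (auto intro!: pmf_integrable_bdd[where B=5] simp: abs_le_iff Tsum_bounds order_trans[OF _ Tsum_bounds(1)])
    also have "\<dots> \<le> (\<Sum>r<R. 5 * (c * eps * q e))" by (intro sum_mono ET[OF eN eq vu]) auto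
    finally show ?thesis by simp
  qed
  ultimately have "q e - real R * (5 * (c * eps * q e)) / (c * real R) \<le> measure_pmf.expectation P2
           (\<lambda>x. if e \<in> snd (snd x) \<and> good e vw u (fst x) (snd x) then fr (fst x) e / c else 0)"
    using c_pos R_pos by (smt (verit) divide_right_mono mult_pos_pos)
  moreover have "real R * (5 * (c * eps * q e)) / (c * real R) = 5 * eps * q e" using c_pos R_pos pv0 pe0 by simp
  ultimately show ?thesis by simp
qed

end


context NC begin

lemma edge_main:
  assumes eN: "e \<in> N"
  shows "(1 - 10 * eps) * q e \<le> measure_pmf.expectation P2 (\<lambda>x. xf (fst x) (snd x) e)"
proof -
  have eE: "e \<in> E" using eN N_sub by auto
  obtain vw u where vu: "vw \<in> V" "u \<in> V" "vw \<noteq> u" "e = {vw, u}" using edgeE[OF eE] by blast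
  have E0: "0 \<le> measure_pmf.expectation P2 (\<lambda>x. xf (fst x) (snd x) e)"
    by (intro Bochner_Integration.integral_nonneg xf_bounds)
  show ?thesis
  proof (cases "eps \<le> 1/10")
    case False
    hence "(1 - 10 * eps) * q e \<le> 0" using q_nonneg[of e] by (intro mult_nonpos_nonneg) auto
    thus ?thesis using E0 by linarith
  next
    case True
    define G where "G = (\<lambda>x. if e \<in> snd (snd x) \<and> good e vw u (fst x) (snd x) then fr (fst x) e / c else 0)"
    have e3: "0 \<le> 1 - 3 * eps" "1 - 3 * eps \<le> 1" using True eps0 by auto
    have G0: "0 \<le> G x" "G x \<le> 1 / c" for x
      unfolding G_def using fr_nonneg fr_le1 c_pos by (auto intro: divide_right_mono)
    have "measure_pmf.expectation P2 (\<lambda>x. (1 - 3 * eps) * G x) \<le> measure_pmf.expectation P2 (\<lambda>x. xf (fst x) (snd x) e)"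
    proof (rule pmf_exp_mono[where B="1 / c" and B'="2 * \<tau> / c"])
      fix x :: "(nat \<Rightarrow> 'a realz) \<times> 'a realz"
      show "(1 - 3 * eps) * G x \<le> xf (fst x) (snd x) e"
        unfolding G_def by (rule K1[OF eN vu(4) True])
      have "(1 - 3 * eps) * G x \<le> 1 * (1 / c)" using e3 G0[of x] by (intro mult_mono) auto
      moreover have "0 \<le> (1 - 3 * eps) * G x" using e3 G0[of x] by simp
      ultimately show "\<bar>(1 - 3 * eps) * G x\<bar> \<le> 1 / c" by simp
      show "\<bar>xf (fst x) (snd x) e\<bar> \<le> 2 * \<tau> / c" using xf_bounds[of "fst x" "snd x" e] by simp
    qed
    moreover have "measure_pmf.expectation P2 (\<lambda>x. (1 - 3 * eps) * G x) = (1 - 3 * eps) * measure_pmf.expectation P2 G"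
      by simp
    moreover have "q e - 5 * eps * q e \<le> measure_pmf.expectation P2 G"
      unfolding G_def by (rule EG[OF eN vu(4) vu(3)])
    ultimately have "(1 - 3 * eps) * (q e - 5 * eps * q e) \<le> measure_pmf.expectation P2 (\<lambda>x. xf (fst x) (snd x) e)"
      using e3 by (smt (verit) mult_left_mono)
    moreover have "(1 - 10 * eps) * q e \<le> (1 - 3 * eps) * (q e - 5 * eps * q e)"
    proof -
      have "(1 - 3 * eps) * (q e - 5 * eps * q e) = (1 - 10 * eps) * q e + (2 * eps + 15 * eps\<^sup>2) * q e"
        by (simp add: algebra_simps power2_eq_square)
      moreover have "0 \<le> (2 * eps + 15 * eps\<^sup>2) * q e" using eps0 q_nonneg[of e] by simp
      ultimately show ?thesis by linarith
    qed
    ultimately show ?thesis by linarith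
  qed
qed

lemma main_loc:
  assumes wnn: "\<And>e. e \<in> E \<Longrightarrow> w e \<ge> 0"
  shows "measure_pmf.expectation (pair_pmf (samples eps pv pe V E) (realization pv pe V E))
           (\<lambda>(\<sigma>, H). \<Sum>e\<in>Nset Alg eps pv pe V E. w e * xfrac Alg eps pv pe V E \<sigma> H e)
         \<ge> (1 - 10 * eps) * phi w Alg pv pe V E (Nset Alg eps pv pe V E)"
proof -
  have "(\<lambda>(\<sigma>, H). \<Sum>e\<in>N. w e * xf \<sigma> H e) = (\<lambda>x. \<Sum>e\<in>N. w e * xf (fst x) (snd x) e)"
    by (simp add: fun_eq_iff split_beta)
  hence "measure_pmf.expectation P2 (\<lambda>(\<sigma>, H). \<Sum>e\<in>N. w e * xf \<sigma> H e) =
         measure_pmf.expectation P2 (\<lambda>x. \<Sum>e\<in>N. w e * xf (fst x) (snd x) e)" by simp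
  also have "\<dots> = (\<Sum>e\<in>N. measure_pmf.expectation P2 (\<lambda>x. w e * xf (fst x) (snd x) e))"
  proof (rule Bochner_Integration.integral_sum)
    fix e assume "e \<in> N"
    show "integrable (measure_pmf P2) (\<lambda>x. w e * xf (fst x) (snd x) e)"
    proof (rule pmf_integrable_bdd[where B="\<bar>w e\<bar> * (2 * \<tau> / c)"])
      fix x :: "(nat \<Rightarrow> 'a realz) \<times> 'a realz"
      have "\<bar>xf (fst x) (snd x) e\<bar> \<le> 2 * \<tau> / c" using xf_bounds[of "fst x" "snd x" e] by simp
      hence "\<bar>w e\<bar> * \<bar>xf (fst x) (snd x) e\<bar> \<le> \<bar>w e\<bar> * (2 * \<tau> / c)"
        by (intro mult_left_mono) auto
      thus "\<bar>w e * xf (fst x) (snd x) e\<bar> \<le> \<bar>w e\<bar> * (2 * \<tau> / c)"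
        by (simp only: abs_mult)
    qed
  qed
  also have "\<dots> = (\<Sum>e\<in>N. w e * measure_pmf.expectation P2 (\<lambda>x. xf (fst x) (snd x) e))"
    by simp
  also have "\<dots> \<ge> (\<Sum>e\<in>N. w e * ((1 - 10 * eps) * q e))"
  proof (rule sum_mono)
    fix e assume eN: "e \<in> N"
    hence "0 \<le> w e" using wnn N_sub by auto
    thus "w e * ((1 - 10 * eps) * q e) \<le> w e * measure_pmf.expectation P2 (\<lambda>x. xf (fst x) (snd x) e)"
      using edge_main[OF eN] by (intro mult_left_mono) auto
  qed
  also have "(\<Sum>e\<in>N. w e * ((1 - 10 * eps) * q e)) = (1 - 10 * eps) * phi w Alg pv pe V E N"
    by (simp add: phi_def sum_distrib_left mult_ac)
  finally show ?thesis .
qed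

end

theorem mainTheorem9:
  fixes V :: "'a set" and E :: "'a set set" and w :: "'a set \<Rightarrow> real"
    and Alg :: "'a set \<times> 'a set set \<Rightarrow> 'a set set"
    and eps pv pe :: real
  assumes "0 < eps" and "eps \<le> 1 / exp 1"
    and "0 < pv" and "pv \<le> 1" and "0 < pe" and "pe \<le> 1"
    and "simple_graph V E"
    and "\<And>e. e \<in> E \<Longrightarrow> w e \<ge> 0"
    and "\<And>H. H \<in> set_pmf (realization pv pe V E) \<Longrightarrow> is_max_weight_matching w H (Alg H)"
  shows "measure_pmf.expectation (pair_pmf (samples eps pv pe V E) (realization pv pe V E))
           (\<lambda>(\<sigma>, H). \<Sum>e\<in>Nset Alg eps pv pe V E. w e * xfrac Alg eps pv pe V E \<sigma> H e)
         \<ge> (1 - 10 * eps) * phi w Alg pv pe V E (Nset Alg eps pv pe V E)"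
proof -
  interpret NC V E w Alg eps pv pe
    by unfold_locales (use assms in auto)
  show ?thesis by (rule main_loc) (use assms in auto)
qed

end
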